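(* Let $\mathscr{C}^1$ and $\mathscr{C}^2$ be composable msCRCs satisfying assumptions (A.1) and (A.2), with $\bar y^1$ and $\bar y^2$ having positive entries, and let $\tilde{\mathscr{C}}^2$ be the reduced system of $\mathscr{C}^2$, with species $Z_1,\dots,Z_p$ (the output species of $\mathscr{C}^2$) and reactions $\tilde v_{\cdot j}\to\tilde v'_{\cdot j}$, $j=1,\dots,r$. Suppose: (1) the stoichiometric subspace of $\tilde{\mathscr{C}}^2$ has dimension $1$; (2) for all $y\in\mathbb{R}^p_{>0}$, $\omega^\top\frac{\partial G}{\partial y}(y,u)\big|_{u=\tilde u(y)}<0$, where $\omega,m_j,G,\tilde u$ are as defined below, computed for the mass-action system $\dot y^2=g^2(\bar y^1,y^2)$ (i.e. the reduced system with rates evaluated at the input value $\bar y^1$); (3) the trajectory $y^2(t)$ of the coupled system is persistent. Then $\mathscr{C}^1$ and $\mathscr{C}^2$ are dynamically composable.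
   Context: CRN/MAS: reactions $v_{\cdot j}\to v'_{\cdot j}$, rate constants $k_j>0$, dynamics $\dot s=\sum_jk_js^{v_{\cdot j}}(v'_{\cdot j}-v_{\cdot j})$, $s^v=\prod_is_i^{v_i}$, $0^0=1$; stoichiometric subspace $\mathscr{S}=\mathrm{span}\{v'_{\cdot j}-v_{\cdot j}\}$. msCRC: a tuple $(\mathcal{S},\mathcal{C},\mathcal{R},\kappa,\mathcal{X},\mathcal{Y})$ with $(\mathcal{S},\mathcal{C},\mathcal{R},\kappa)$ an MAS, $\mathcal{X}\subset\mathcal{S}$ input species, $\mathcal{Y}=\mathcal{S}\setminus\mathcal{X}$ output species; dynamics $\dot x=f(x,y)$, $\dot y=g(x,y)$. Composable: $\mathcal{Y}^1=\mathcal{X}^2$ and $\mathcal{Y}^2\cap\mathcal{X}^1=\varnothing$. (A.1): $\mathscr{C}^1$ has dynamics $\dot x^1=f^1(x^1,y^1)$, $\dot y^1=g^1(x^1,y^1)$, $x^1(0)=x^1_0,y^1(0)=y^1_0$; $\mathscr{C}^2$ has dynamics $\dot x^2=0$, $\dot y^2=g^2(x^2,y^2)$, $x^2(0)=\bar y^1$, $y^2(0)=y^2_0$. (A.2): $y^1(t)\to\bar y^1$ for $\mathscr{C}^1$, and $y^2(t)\to\bar y^2$ for $\mathscr{C}^2$ with $x^2\equiv\bar y^1$. Dynamically composable: the coupled system $\dot x^1=f^1(x^1,y^1)$, $\dot y^1=g^1(x^1,y^1)$, $\dot y^2=g^2(y^1,y^2)$, $x^1(0)=x^1_0,y^1(0)=y^1_0,y^2(0)=y^2_0$,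 has $(y^1(t),y^2(t))\to(\bar y^1,\bar y^2)$. Reduced system of an msCRC: species $\mathcal{Y}$, complexes $\pi_{\mathcal{Y}}(\mathcal{C})$ (projection onto output coordinates), reactions $\pi_{\mathcal{Y}}(v_{\cdot j})\to\pi_{\mathcal{Y}}(v'_{\cdot j})$ with time-varying rates $\kappa_j\prod_{S_i\notin\mathcal{Y}}s_i(t)^{v_{ij}}$. Persistent: $\liminf_{t\to\infty}y^2_i(t)>0$ for all $i$. Definitions for condition (2): for an MAS with $\dim\mathscr{S}=1$ and rate constants $k_j$, fix $\omega\in\mathbb{R}^p\setminus\{0\}$ spanning $\mathscr{S}$ such that $v'_{\cdot j}-v_{\cdot j}=m_j\omega$ with $m_j\in\mathbb{Z}\setminus\{0\}$ for each reaction $j$. Define $$G(s,u)=\sum_{\{j:m_j>0\}}k_js^{v_{\cdot j}}\sum_{i=0}^{m_j-1}u^i+\sum_{\{j:m_j<0\}}k_js^{v_{\cdot j}}\Big(-\sum_{i=m_j}^{-1}u^i\Big),\quad s\in\mathbb{R}^p_{>0},\ u>0,$$ and let $\tilde u:\mathbb{R}^p_{>0}\to\mathbb{R}_{>0}$ be a function with $G(s,\tilde u(s))=0$ for all $s$. The derivative $\partial G/\partial s$ is the partial gradient in $s$ with $u$ held fixed. *)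

theory Defs
  imports "HOL-Analysis.Analysis"
begin

text \<open>A complex is a vector of nonnegative integer stoichiometric coefficients,
  a reaction is a triple (reactant complex v, product complex v', rate constant k).\<close>

type_synonym 's complex = "'s \<Rightarrow> nat"
type_synonym 's rxn = "'s complex \<times> 's complex \<times> real"

text \<open>Monomial s^v over the species set S (0^0 = 1 holds for Isabelle's power).\<close>
definition monom :: "'s set \<Rightarrow> ('s \<Rightarrow> real) \<Rightarrow> 's complex \<Rightarrow> real" where
  "monom S c v = (\<Prod>i\<in>S. c i ^ v i)"

definition mas_field :: "'s set \<Rightarrow> 's rxn list \<Rightarrow> ('s \<Rightarrow> real) \<Rightarrow> 's \<Rightarrow> real" where
  "mas_field S R c i =
     (\<Sum>(v, v', k) \<leftarrow> R. k * monom S c v * (real (v' i) - real (v i)))"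

text \<open>An msCRC given by species set S, reactions R (complexes supported on S,
  positive rate constants) and input species X; the outputs are S - X.\<close>
definition is_msCRC :: "'s set \<Rightarrow> 's rxn list \<Rightarrow> 's set \<Rightarrow> bool" where
  "is_msCRC S R X \<longleftrightarrow> X \<subseteq> S \<and>
     (\<forall>(v, v', k) \<in> set R. k > 0 \<and> (\<forall>i. i \<notin> S \<longrightarrow> v i = 0 \<and> v' i = 0))"

definition composable :: "'s set \<Rightarrow> 's set \<Rightarrow> 's set \<Rightarrow> 's set \<Rightarrow> bool" where
  "composable S1 X1 S2 X2 \<longleftrightarrow> S1 - X1 = X2 \<and> (S2 - X2) \<inter> X1 = {}"

definition ode_sol :: "'s set \<Rightarrow> (('s \<Rightarrow> real) \<Rightarrow> 's \<Rightarrow> real) \<Rightarrow> (real \<Rightarrow> 's \<Rightarrow> real) \<Rightarrow> bool" where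
  "ode_sol E F c \<longleftrightarrow>
     (\<forall>i\<in>E. \<forall>t\<ge>0. ((\<lambda>\<tau>. c \<tau> i) has_real_derivative F (c t) i) (at t within {0..}))"

definition proj_rvec :: "'s::finite set \<Rightarrow> 's rxn \<Rightarrow> real^'s" where
  "proj_rvec Y r = (\<chi> i. if i \<in> Y then real (fst (snd r) i) - real (fst r i) else 0)"

text \<open>Stoichiometric subspace of the reduced system (species Y, reactions
  pi_Y(v_j) -> pi_Y(v'_j)).\<close>
definition reduced_stoich :: "'s::finite set \<Rightarrow> 's rxn list \<Rightarrow> (real^'s) set" where
  "reduced_stoich Y R = span (proj_rvec Y ` set R)"

text \<open>Rate constant of reaction r in the MAS  dy2/dt = g2(ybar1, y2), i.e. the reduced
  system with the input species (S - Y) frozen at xbar:  k * prod_{i in S-Y} xbar_i^{v_i}.\<close>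
definition frozen_rate :: "'s set \<Rightarrow> 's set \<Rightarrow> ('s \<Rightarrow> real) \<Rightarrow> 's rxn \<Rightarrow> real" where
  "frozen_rate S Y xbar r = snd (snd r) * monom (S - Y) xbar (fst r)"

text \<open>The function G(y,u) of condition (2) for the one-dimensional MAS on species Y with
  reactions R (complexes projected on Y), rate constants K j, and integers m_j.\<close>
definition G_fun :: "'s set \<Rightarrow> 's rxn list \<Rightarrow> (nat \<Rightarrow> real) \<Rightarrow> (nat \<Rightarrow> int)
                      \<Rightarrow> ('s \<Rightarrow> real) \<Rightarrow> real \<Rightarrow> real" where
  "G_fun Y R K m y u =
     (\<Sum>j\<in>{j. j < length R \<and> m j > 0}.
         K j * monom Y y (fst (R ! j)) * (\<Sum>i\<in>{0..m j - 1}. u powi i))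
   + (\<Sum>j\<in>{j. j < length R \<and> m j < 0}.
         K j * monom Y y (fst (R ! j)) * (- (\<Sum>i\<in>{m j..-1}. u powi i)))"

definition omega_dG :: "'s::finite set \<Rightarrow> (('s \<Rightarrow> real) \<Rightarrow> real \<Rightarrow> real) \<Rightarrow> real^'s
                        \<Rightarrow> ('s \<Rightarrow> real) \<Rightarrow> real \<Rightarrow> real" where
  "omega_dG Y G \<omega> y u = (\<Sum>i\<in>Y. \<omega> $ i * deriv (\<lambda>x. G (y(i := x)) u) (y i))"

end

theory Submission
  imports Defs
begin

lemma within_to_at:
  fixes f :: "real \<Rightarrow> real"
  assumes "t > 0" "(f has_real_derivative D) (at t within {0..})"
  shows "(f has_real_derivative D) (at t)"
proof -
  have "t \<in> interior {0::real..}" using assms(1) by simp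
  then have "at t within {0..} = at t" by (rule at_within_interior)
  with assms(2) show ?thesis by simp
qed

lemma deriv_cont_on:
  fixes f :: "real \<Rightarrow> real"
  assumes "\<forall>t\<ge>0. (f has_real_derivative f' t) (at t within {0..})"
  shows "continuous_on {0..} f"
  unfolding continuous_on_eq_continuous_within
  using assms by (auto intro: has_derivative_continuous simp: has_field_derivative_def)

lemma mvt_half:
  fixes f :: "real \<Rightarrow> real"
  assumes d: "\<forall>t\<ge>0. (f has_real_derivative f' t) (at t within {0..})"
    and ab: "0 \<le> a" "a < b"
  shows "\<exists>z. a < z \<and> z < b \<and> f b - f a = (b - a) * f' z"
proof -
  have c: "continuous_on {a..b} f"
    by (rule continuous_on_subset[OF deriv_cont_on[OF d]]) (use ab in auto)
  have "\<And>x. a < x \<Longrightarrow> x < b \<Longrightarrow> (f has_real_derivative f' x) (at x)"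
    using d ab by (intro within_to_at) auto
  then have "\<And>x. a < x \<Longrightarrow> x < b \<Longrightarrow> f differentiable at x"
    using real_differentiable_def by blast
  from MVT[OF ab(2) c this] obtain l z where
    z: "a < z" "z < b" "(f has_real_derivative l) (at z)" "f b - f a = (b - a) * l" by blast
  have "(f has_real_derivative f' z) (at z)" using d ab z by (intro within_to_at) auto
  with z(3) have "l = f' z" by (rule DERIV_unique)
  with z show ?thesis by blast
qed

lemma deriv_lim_le0:
  fixes f :: "real \<Rightarrow> real"
  assumes d: "\<forall>t\<ge>0. (f has_real_derivative f' t) (at t within {0..})"
    and fl: "(f \<longlongrightarrow> a) at_top" and dl: "(f' \<longlongrightarrow> L) at_top"
  shows "L \<le> 0"
proof (rule ccontr)
  assume "\<not> L \<le> 0" then have L: "L > 0" by simp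
  have "eventually (\<lambda>t. f' t > L/2) at_top"
    using order_tendstoD(1)[OF dl, of "L/2"] L by simp
  then obtain T where T: "\<And>t. t \<ge> T \<Longrightarrow> f' t > L/2" by (auto simp: eventually_at_top_linorder)
  have "eventually (\<lambda>t. f t < a + 1) at_top"
    using order_tendstoD(2)[OF fl, of "a+1"] by simp
  then obtain T1 where T1: "\<And>t. t \<ge> T1 \<Longrightarrow> f t < a + 1" by (auto simp: eventually_at_top_linorder)
  define T2 where "T2 = max 0 (max T T1)"
  define t where "t = T2 + 2 * \<bar>a + 1 - f T2\<bar> / L + 1"
  have "0 \<le> 2 * \<bar>a + 1 - f T2\<bar> / L" using L by simp
  then have tT: "t > T2" by (simp add: t_def)
  obtain z where z: "T2 < z" "z < t" "f t - f T2 = (t - T2) * f' z"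
    using mvt_half[OF d, of T2 t] tT by (auto simp: T2_def)
  have "f' z > L/2" using T z by (simp add: T2_def)
  then have "(t - T2) * f' z \<ge> (t - T2) * (L/2)" using tT by (intro mult_left_mono) auto
  also have "(t - T2) * (L/2) = \<bar>a + 1 - f T2\<bar> + L/2" using L by (simp add: t_def field_simps)
  finally have "f t \<ge> f T2 + \<bar>a + 1 - f T2\<bar> + L/2" using z by linarith
  then have "f t > a + 1" using L by linarith
  moreover have "f t < a + 1" using T1 tT by (simp add: T2_def)
  ultimately show False by simp
qed

lemma deriv_lim_zero:
  fixes f :: "real \<Rightarrow> real"
  assumes d: "\<forall>t\<ge>0. (f has_real_derivative f' t) (at t within {0..})"
    and fl: "(f \<longlongrightarrow> a) at_top" and dl: "(f' \<longlongrightarrow> L) at_top"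
  shows "L = 0"
proof -
  have "L \<le> 0" by (rule deriv_lim_le0[OF d fl dl])
  moreover have "-L \<le> 0"
    by (rule deriv_lim_le0[of "\<lambda>t. - f t" "\<lambda>t. - f' t" "-a"])
       (use d fl dl in \<open>auto intro: DERIV_minus tendsto_minus\<close>)
  ultimately show ?thesis by simp
qed

lemma eventually_below:
  fixes f :: "real \<Rightarrow> real"
  assumes d: "\<forall>t\<ge>0. (f has_real_derivative f' t) (at t within {0..})"
    and T0: "T0 \<ge> 0" and al: "\<alpha> > 0"
    and H: "\<forall>t\<ge>T0. f t \<ge> A \<longrightarrow> f' t \<le> - \<alpha>"
  shows "\<exists>T. \<forall>t\<ge>T. f t \<le> A"
proof -
  have "\<exists>t0\<ge>T0. f t0 \<le> A"
  proof (rule ccontr)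
    assume "\<not> ?thesis" then have gt: "\<And>t. t \<ge> T0 \<Longrightarrow> f t > A" by force
    define t where "t = T0 + \<bar>f T0 - A\<bar> / \<alpha> + 1"
    have "0 \<le> \<bar>f T0 - A\<bar> / \<alpha>" using al by simp
    then have tT: "t > T0" by (simp add: t_def)
    obtain z where z: "T0 < z" "z < t" "f t - f T0 = (t - T0) * f' z"
      using mvt_half[OF d T0 tT] by blast
    have "f z \<ge> A" using gt[of z] z by simp
    then have "f' z \<le> - \<alpha>" using H z by auto
    then have "(t - T0) * f' z \<le> (t - T0) * (-\<alpha>)" using tT by (intro mult_left_mono) auto
    also have "(t - T0) * (-\<alpha>) = - \<bar>f T0 - A\<bar> - \<alpha>" using al by (simp add: t_def field_simps)
    finally have "f t < A" using z al by linarith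
    with gt[of t] tT show False by simp
  qed
  then obtain t0 where t0: "t0 \<ge> T0" "f t0 \<le> A" by blast
  have "\<forall>t\<ge>t0. f t \<le> A"
  proof (intro allI impI, rule ccontr)
    fix t1 assume t1: "t1 \<ge> t0" "\<not> f t1 \<le> A"
    then have t01: "t0 < t1" using t0 by (cases "t0 = t1") auto
    define S where "S = {t0..t1} \<inter> f -` {..A}"
    have cs: "continuous_on {t0..t1} f"
      by (rule continuous_on_subset[OF deriv_cont_on[OF d]]) (use t0 T0 in auto)
    have clS: "closed S" unfolding S_def by (rule continuous_closed_preimage[OF cs]) auto
    have "t0 \<in> S" using t0 t01 by (auto simp: S_def)
    then have neS: "S \<noteq> {}" by blast
    have bS: "bdd_above S" by (auto simp: S_def bdd_above_def)
    define t2 where "t2 = Sup S"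
    have t2S: "t2 \<in> S" using closed_contains_Sup[OF neS bS clS] by (simp add: t2_def)
    then have t2: "t0 \<le> t2" "t2 \<le> t1" "f t2 \<le> A" by (auto simp: S_def)
    then have t21: "t2 < t1" using t1 by (cases "t2 = t1") auto
    have above: "f s > A" if "t2 < s" "s \<le> t1" for s
    proof (rule ccontr)
      assume "\<not> f s > A" then have "s \<in> S" using that t2 by (auto simp: S_def)
      then have "s \<le> t2" unfolding t2_def by (rule cSup_upper[OF _ bS])
      with that show False by simp
    qed
    obtain z where z: "t2 < z" "z < t1" "f t1 - f t2 = (t1 - t2) * f' z"
      using mvt_half[OF d _ t21] t2 t0 T0 by auto
    have "f' z \<le> - \<alpha>" using H above[of z] z t2 t0 by auto
    then have "(t1 - t2) * f' z < 0" using t21 al by (simp add: mult_pos_neg)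
    with z t2 t1 show False by linarith
  qed
  then show ?thesis by blast
qed

lemma local_strict_mono:
  fixes f :: "real \<Rightarrow> real"
  assumes ab: "a < b"
    and loc: "\<And>x. a \<le> x \<Longrightarrow> x \<le> b \<Longrightarrow> \<exists>d>0. \<forall>h. 0 < h \<and> h < d \<longrightarrow>
               (x + h \<le> b \<longrightarrow> f x < f (x + h)) \<and> (a \<le> x - h \<longrightarrow> f (x - h) < f x)"
  shows "f a < f b"
proof -
  define M where "M = {x\<in>{a..b}. \<forall>y\<in>{a<..x}. f a < f y}"
  have aM: "a \<in> M" using ab by (auto simp: M_def)
  have bM: "bdd_above M" by (auto simp: M_def bdd_above_def)
  define s where "s = Sup M"
  have as: "a \<le> s" unfolding s_def using aM bM by (rule cSup_upper)
  have sb: "s \<le> b" unfolding s_def using aM by (intro cSup_least) (auto simp: M_def)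
  have i: "f a < f y" if "a < y" "y < s" for y
  proof -
    have "y < Sup M" using that by (simp add: s_def)
    then obtain x where "x \<in> M" "y < x" using less_cSupE[of y M] aM by blast
    then show ?thesis using that by (auto simp: M_def)
  qed
  have ext: "s + e \<in> M" if e: "0 < e" "s + e \<le> b" "\<And>y. s \<le> y \<Longrightarrow> y \<le> s + e \<Longrightarrow> a < y \<Longrightarrow> f a < f y" for e
  proof -
    have "\<forall>y\<in>{a<..s+e}. f a < f y"
    proof
      fix y assume y: "y \<in> {a<..s+e}"
      show "f a < f y"
      proof (cases "y < s")
        case True then show ?thesis using i y by auto
      next
        case False then show ?thesis using e(3)[of y] y by auto
      qed
    qed
    then show ?thesis using e as by (auto simp: M_def)
  qed
  have sup_ext: False if "s + e \<in> M" "0 < e" for e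
  proof -
    have "s + e \<le> Sup M" using that(1) bM by (rule cSup_upper)
    with that show False by (simp add: s_def)
  qed
  have sa: "a < s"
  proof (rule ccontr)
    assume "\<not> a < s" then have s: "s = a" using as by simp
    obtain d where d: "d > 0" "\<And>h. 0 < h \<Longrightarrow> h < d \<Longrightarrow> a + h \<le> b \<Longrightarrow> f a < f (a + h)"
      using loc[of a] ab by auto
    define e where "e = min (d/2) (b - a)"
    have e: "0 < e" "e < d" "a + e \<le> b" using d ab by (auto simp: e_def)
    have "s + e \<in> M"
    proof (rule ext)
      fix y assume y: "s \<le> y" "y \<le> s + e" "a < y"
      have "f a < f (a + (y - a))" using d(2)[of "y - a"] y e s by auto
      then show "f a < f y" by simp
    qed (use e s in auto)
    with sup_ext e show False by blast
  qed
  have fs: "f a < f s"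
  proof -
    obtain d where d: "d > 0" "\<And>h. 0 < h \<Longrightarrow> h < d \<Longrightarrow> a \<le> s - h \<Longrightarrow> f (s - h) < f s"
      using loc[of s] as sb by auto
    define h where "h = min (d/2) ((s - a)/2)"
    have h0: "h \<le> (s - a)/2" unfolding h_def by (rule min.cobounded2)
    have h: "0 < h" "h < d" "a \<le> s - h" "a < s - h" using d sa h0 by (auto simp: h_def)
    have "f (s - h) < f s" using d h by auto
    moreover have "f a < f (s - h)" using i h by auto
    ultimately show ?thesis by simp
  qed
  have "s = b"
  proof (rule ccontr)
    assume "s \<noteq> b" then have sb': "s < b" using sb by simp
    obtain d where d: "d > 0" "\<And>h. 0 < h \<Longrightarrow> h < d \<Longrightarrow> s + h \<le> b \<Longrightarrow> f s < f (s + h)"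
      using loc[of s] as sb by auto
    define e where "e = min (d/2) (b - s)"
    have e: "0 < e" "e < d" "s + e \<le> b" using d sb' by (auto simp: e_def)
    have "s + e \<in> M"
    proof (rule ext)
      fix y assume y: "s \<le> y" "y \<le> s + e" "a < y"
      show "f a < f y"
      proof (cases "y = s")
        case True then show ?thesis using fs by simp
      next
        case False
        then have "f s < f (s + (y - s))" using d(2)[of "y - s"] y e by auto
        then show ?thesis using fs by simp
      qed
    qed (use e in auto)
    with sup_ext e show False by blast
  qed
  with fs show ?thesis by simp
qed

lemma sum_list_map_nth: "sum_list (map f xs) = (\<Sum>j<length xs. f (xs ! j))"
  by (simp add: sum_list_sum_nth lessThan_atLeast0)

lemma mas_field_nth:
  "mas_field S R c i = (\<Sum>j<length R. snd (snd (R!j)) * monom S c (fst (R!j)) *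
      (real (fst (snd (R!j)) i) - real (fst (R!j) i)))"
  unfolding mas_field_def sum_list_map_nth by (simp add: split_def)

lemma gronwall_zero:
  fixes d d' :: "real \<Rightarrow> real"
  assumes T: "T > 0" and c: "continuous_on {0..T} d"
    and dd: "\<And>t. 0 < t \<Longrightarrow> t < T \<Longrightarrow> (d has_real_derivative d' t) (at t)"
    and le: "\<And>t. 0 < t \<Longrightarrow> t < T \<Longrightarrow> d' t \<le> K * d t"
    and d0: "d 0 = 0" and nn: "\<And>t. 0 \<le> t \<Longrightarrow> t \<le> T \<Longrightarrow> d t \<ge> 0"
  shows "d T = 0"
proof -
  define f where "f t = d t * exp (- K * t)" for t
  have cf: "continuous_on {0..T} f" unfolding f_def
    by (intro continuous_intros c)
  have df: "(f has_real_derivative (d' t * exp (- K * t) + d t * (exp (- K * t) * (- K)))) (at t)"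
    if "0 < t" "t < T" for t
    unfolding f_def
    by (rule derivative_eq_intros dd[OF that] refl | simp)+
  have "\<And>x. 0 < x \<Longrightarrow> x < T \<Longrightarrow> f differentiable at x"
    using df real_differentiable_def by blast
  from MVT[OF T cf this] obtain l z where
    z: "0 < z" "z < T" "(f has_real_derivative l) (at z)" "f T - f 0 = (T - 0) * l" by blast
  have "l = d' z * exp (- K * z) + d z * (exp (- K * z) * (- K))"
    using DERIV_unique[OF z(3) df[OF z(1,2)]] .
  also have "\<dots> = (d' z - K * d z) * exp (- K * z)" by (simp add: algebra_simps)
  also have "\<dots> \<le> 0" using le[OF z(1,2)] by (intro mult_nonpos_nonneg) auto
  finally have "f T \<le> 0" using z(4) T d0 by (simp add: f_def mult_nonneg_nonpos)
  then have "d T \<le> 0" by (simp add: f_def mult_le_0_iff)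
  with nn[of T] T show ?thesis by simp
qed

lemma power_lip:
  fixes a b B :: real
  assumes "\<bar>a\<bar> \<le> B" "\<bar>b\<bar> \<le> B" "B \<ge> 1"
  shows "\<bar>a ^ n - b ^ n\<bar> \<le> real n * B ^ n * \<bar>a - b\<bar>"
proof (induction n)
  case 0 then show ?case by simp
next
  case (Suc n)
  have "a ^ Suc n - b ^ Suc n = a * (a ^ n - b ^ n) + (a - b) * b ^ n" by (simp add: algebra_simps)
  then have "\<bar>a ^ Suc n - b ^ Suc n\<bar> \<le> \<bar>a\<bar> * \<bar>a ^ n - b ^ n\<bar> + \<bar>a - b\<bar> * \<bar>b\<bar> ^ n"
    by (metis abs_mult abs_triangle_ineq power_abs)
  also have "\<dots> \<le> B * (real n * B ^ n * \<bar>a - b\<bar>) + \<bar>a - b\<bar> * B ^ n"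
    using assms Suc by (intro add_mono mult_mono power_mono mult_left_mono) auto
  also have "\<dots> \<le> B * (real n * B ^ n * \<bar>a - b\<bar>) + \<bar>a - b\<bar> * B ^ Suc n"
  proof -
    have "B ^ n \<le> B ^ Suc n" using assms(3) by (simp add: power_increasing)
    then show ?thesis by (intro add_left_mono mult_left_mono) auto
  qed
  also have "\<dots> = real (Suc n) * B ^ Suc n * \<bar>a - b\<bar>" by (simp add: algebra_simps)
  finally show ?case .
qed

lemma monom_bound:
  assumes "finite S" "\<forall>i\<in>S. \<bar>a i\<bar> \<le> B"
  shows "\<bar>monom S a v\<bar> \<le> (\<Prod>i\<in>S. B ^ v i)"
  unfolding monom_def abs_prod
proof (intro prod_mono conjI)
  fix i assume "i \<in> S"
  then have "\<bar>a i\<bar> ^ v i \<le> B ^ v i" using assms by (intro power_mono) auto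
  then show "\<bar>a i ^ v i\<bar> \<le> B ^ v i" by (simp add: power_abs)
qed simp

lemma monom_lip:
  assumes fin: "finite S" and B: "B \<ge> 1"
  shows "\<exists>C\<ge>0. \<forall>a b. (\<forall>i\<in>S. \<bar>a i\<bar> \<le> B \<and> \<bar>b i\<bar> \<le> B) \<longrightarrow>
           \<bar>monom S a v - monom S b v\<bar> \<le> C * (\<Sum>i\<in>S. \<bar>a i - b i\<bar>)"
  using fin
proof (induction S rule: finite_induct)
  case empty then show ?case by (auto simp: monom_def)
next
  case (insert x F)
  from insert.IH obtain C where C: "C \<ge> 0"
    "\<And>a b. (\<forall>i\<in>F. \<bar>a i\<bar> \<le> B \<and> \<bar>b i\<bar> \<le> B) \<Longrightarrow> \<bar>monom F a v - monom F b v\<bar> \<le> C * (\<Sum>i\<in>F. \<bar>a i - b i\<bar>)"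
    by blast
  define M where "M = (\<Prod>i\<in>F. B ^ v i)"
  have M0: "M \<ge> 0" using B by (simp add: M_def prod_nonneg)
  define C' where "C' = real (v x) * B ^ v x * M + B ^ v x * C"
  have C'0: "C' \<ge> 0" using B M0 C by (simp add: C'_def)
  show ?case
  proof (intro exI[of _ C'] conjI allI impI C'0)
    fix a b assume ab: "\<forall>i\<in>insert x F. \<bar>a i\<bar> \<le> B \<and> \<bar>b i\<bar> \<le> B"
    let ?A = "monom F a v" and ?B = "monom F b v"
    have mi: "monom (insert x F) c v = c x ^ v x * monom F c v" for c
      using insert by (simp add: monom_def)
    have "a x ^ v x * ?A - b x ^ v x * ?B = (a x ^ v x - b x ^ v x) * ?A + b x ^ v x * (?A - ?B)"
      by (simp add: algebra_simps)
    then have "\<bar>a x ^ v x * ?A - b x ^ v x * ?B\<bar> \<le> \<bar>a x ^ v x - b x ^ v x\<bar> * \<bar>?A\<bar> + \<bar>b x\<bar> ^ v x * \<bar>?A - ?B\<bar>"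
      by (metis abs_mult abs_triangle_ineq power_abs)
    also have "\<dots> \<le> (real (v x) * B ^ v x * \<bar>a x - b x\<bar>) * M + B ^ v x * (C * (\<Sum>i\<in>F. \<bar>a i - b i\<bar>))"
    proof (intro add_mono mult_mono power_mono)
      show "\<bar>a x ^ v x - b x ^ v x\<bar> \<le> real (v x) * B ^ v x * \<bar>a x - b x\<bar>"
        using ab B by (intro power_lip) auto
      show "\<bar>?A\<bar> \<le> M" unfolding M_def using ab insert.hyps by (intro monom_bound) auto
      show "\<bar>?A - ?B\<bar> \<le> C * (\<Sum>i\<in>F. \<bar>a i - b i\<bar>)" using ab by (intro C(2)) auto
    qed (use ab B C in auto)
    also have "\<dots> \<le> C' * \<bar>a x - b x\<bar> + C' * (\<Sum>i\<in>F. \<bar>a i - b i\<bar>)"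
    proof -
      have s0: "(\<Sum>i\<in>F. \<bar>a i - b i\<bar>) \<ge> 0" by (simp add: sum_nonneg)
      have "(real (v x) * B ^ v x * \<bar>a x - b x\<bar>) * M = (real (v x) * B ^ v x * M) * \<bar>a x - b x\<bar>" by simp
      also have "\<dots> \<le> C' * \<bar>a x - b x\<bar>" using B C by (intro mult_right_mono) (auto simp: C'_def)
      finally have 1: "(real (v x) * B ^ v x * \<bar>a x - b x\<bar>) * M \<le> C' * \<bar>a x - b x\<bar>" .
      have "B ^ v x * (C * (\<Sum>i\<in>F. \<bar>a i - b i\<bar>)) = (B ^ v x * C) * (\<Sum>i\<in>F. \<bar>a i - b i\<bar>)" by simp
      also have "\<dots> \<le> C' * (\<Sum>i\<in>F. \<bar>a i - b i\<bar>)" using s0 B M0 by (intro mult_right_mono) (auto simp: C'_def)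
      finally show ?thesis using 1 by linarith
    qed
    also have "\<dots> = C' * (\<Sum>i\<in>insert x F. \<bar>a i - b i\<bar>)"
      using insert by (simp add: algebra_simps)
    finally show "\<bar>monom (insert x F) a v - monom (insert x F) b v\<bar> \<le> C' * (\<Sum>i\<in>insert x F. \<bar>a i - b i\<bar>)"
      by (simp add: mi)
  qed
qed

lemma mas_lip:
  assumes fin: "finite S" and B: "B \<ge> 1"
  shows "\<exists>L\<ge>0. \<forall>a b. (\<forall>i\<in>S. \<bar>a i\<bar> \<le> B \<and> \<bar>b i\<bar> \<le> B) \<longrightarrow>
           (\<forall>i\<in>S. \<bar>mas_field S R a i - mas_field S R b i\<bar> \<le> L * (\<Sum>l\<in>S. \<bar>a l - b l\<bar>))"
proof -
  have "\<forall>v. \<exists>C. C \<ge> 0 \<and> (\<forall>a b. (\<forall>i\<in>S. \<bar>a i\<bar> \<le> B \<and> \<bar>b i\<bar> \<le> B) \<longrightarrow>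
           \<bar>monom S a v - monom S b v\<bar> \<le> C * (\<Sum>i\<in>S. \<bar>a i - b i\<bar>))"
    using monom_lip[OF fin B] by blast
  from choice[OF this] obtain Cf where Cf: "\<And>v. Cf v \<ge> 0"
    "\<And>v a b. (\<forall>i\<in>S. \<bar>a i\<bar> \<le> B \<and> \<bar>b i\<bar> \<le> B) \<Longrightarrow>
           \<bar>monom S a v - monom S b v\<bar> \<le> Cf v * (\<Sum>i\<in>S. \<bar>a i - b i\<bar>)" by blast
  define k where "k j = snd (snd (R!j))" for j
  define w where "w j = fst (R!j)" for j
  define dd where "dd j i = real (fst (snd (R!j)) i) - real (fst (R!j) i)" for j i
  define Li where "Li i = (\<Sum>j<length R. \<bar>k j\<bar> * Cf (w j) * \<bar>dd j i\<bar>)" for i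
  define L where "L = (\<Sum>i\<in>S. Li i)"
  have Li0: "Li i \<ge> 0" for i unfolding Li_def using Cf(1) by (intro sum_nonneg) auto
  have L0: "L \<ge> 0" unfolding L_def using Li0 by (intro sum_nonneg) auto
  show ?thesis
  proof (intro exI[of _ L] conjI L0 allI impI ballI)
    fix a b i assume ab: "\<forall>i\<in>S. \<bar>a i\<bar> \<le> B \<and> \<bar>b i\<bar> \<le> B" and i: "i \<in> S"
    let ?s = "\<Sum>l\<in>S. \<bar>a l - b l\<bar>"
    have s0: "?s \<ge> 0" by (simp add: sum_nonneg)
    have "mas_field S R a i - mas_field S R b i =
        (\<Sum>j<length R. k j * (monom S a (w j) - monom S b (w j)) * dd j i)"
      unfolding mas_field_nth k_def w_def dd_def sum_subtractf[symmetric]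
      by (intro sum.cong) (auto simp: algebra_simps)
    also have "\<bar>\<dots>\<bar> \<le> (\<Sum>j<length R. \<bar>k j * (monom S a (w j) - monom S b (w j)) * dd j i\<bar>)"
      by (rule sum_abs)
    also have "\<dots> \<le> (\<Sum>j<length R. \<bar>k j\<bar> * Cf (w j) * \<bar>dd j i\<bar> * ?s)"
    proof (intro sum_mono)
      fix j
      have "\<bar>k j * (monom S a (w j) - monom S b (w j)) * dd j i\<bar>
         = \<bar>k j\<bar> * \<bar>monom S a (w j) - monom S b (w j)\<bar> * \<bar>dd j i\<bar>" by (simp add: abs_mult)
      also have "\<dots> \<le> \<bar>k j\<bar> * (Cf (w j) * ?s) * \<bar>dd j i\<bar>"
        using Cf(2)[OF ab] by (intro mult_right_mono mult_left_mono) auto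
      finally show "\<bar>k j * (monom S a (w j) - monom S b (w j)) * dd j i\<bar> \<le> \<bar>k j\<bar> * Cf (w j) * \<bar>dd j i\<bar> * ?s"
        by (simp add: algebra_simps)
    qed
    also have "\<dots> = Li i * ?s" unfolding Li_def by (simp add: sum_distrib_right)
    also have "\<dots> \<le> L * ?s"
    proof -
      have "Li i \<le> L" unfolding L_def using i fin Li0 by (intro member_le_sum) auto
      then show ?thesis using s0 by (intro mult_right_mono) auto
    qed
    finally show "\<bar>mas_field S R a i - mas_field S R b i\<bar> \<le> L * ?s" .
  qed
qed

lemma ode_unique:
  assumes fin: "finite S" and sx: "ode_sol S (mas_field S R) x" and sy: "ode_sol S (mas_field S R) y"
    and init: "\<forall>i\<in>S. x 0 i = y 0 i" and t: "t \<ge> 0" and i: "i \<in> S"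
  shows "x t i = y t i"
proof (cases "t = 0")
  case True then show ?thesis using init i by simp
next
  case False
  then have T: "t > 0" using t by simp
  have dx: "\<forall>\<tau>\<ge>0. ((\<lambda>\<tau>. x \<tau> i) has_real_derivative mas_field S R (x \<tau>) i) (at \<tau> within {0..})" if "i \<in> S" for i
    using sx that by (auto simp: ode_sol_def)
  have dy: "\<forall>\<tau>\<ge>0. ((\<lambda>\<tau>. y \<tau> i) has_real_derivative mas_field S R (y \<tau>) i) (at \<tau> within {0..})" if "i \<in> S" for i
    using sy that by (auto simp: ode_sol_def)
  have cx: "continuous_on {0..t} (\<lambda>\<tau>. x \<tau> i)" if "i \<in> S" for i
    by (rule continuous_on_subset[OF deriv_cont_on[OF dx[OF that]]]) auto
  have cy: "continuous_on {0..t} (\<lambda>\<tau>. y \<tau> i)" if "i \<in> S" for i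
    by (rule continuous_on_subset[OF deriv_cont_on[OF dy[OF that]]]) auto
  define g where "g \<tau> = (\<Sum>i\<in>S. \<bar>x \<tau> i\<bar> + \<bar>y \<tau> i\<bar>)" for \<tau>
  have cg: "continuous_on {0..t} g" unfolding g_def
    by (intro continuous_on_sum continuous_on_add continuous_on_rabs cx cy)
  obtain tm where tm: "\<forall>\<tau>\<in>{0..t}. g \<tau> \<le> g tm"
    using continuous_attains_sup[OF compact_Icc _ cg] T by auto
  define B where "B = max 1 (g tm)"
  have B1: "B \<ge> 1" by (simp add: B_def)
  have bnd: "\<bar>x \<tau> l\<bar> \<le> B \<and> \<bar>y \<tau> l\<bar> \<le> B" if "\<tau> \<in> {0..t}" "l \<in> S" for \<tau> l
  proof -
    have "\<bar>x \<tau> l\<bar> + \<bar>y \<tau> l\<bar> \<le> g \<tau>" unfolding g_def using fin that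
      by (intro member_le_sum) auto
    also have "\<dots> \<le> g tm" using tm that by blast
    also have "\<dots> \<le> B" by (simp add: B_def)
    finally show ?thesis by auto
  qed
  obtain L where L: "L \<ge> 0" "\<And>a b. (\<forall>i\<in>S. \<bar>a i\<bar> \<le> B \<and> \<bar>b i\<bar> \<le> B) \<Longrightarrow>
           (\<forall>i\<in>S. \<bar>mas_field S R a i - mas_field S R b i\<bar> \<le> L * (\<Sum>l\<in>S. \<bar>a l - b l\<bar>))"
    using mas_lip[OF fin B1, of R] by blast
  define e where "e \<tau> l = x \<tau> l - y \<tau> l" for \<tau> l
  define d where "d \<tau> = (\<Sum>l\<in>S. (e \<tau> l)^2)" for \<tau>
  define \<Delta> where "\<Delta> \<tau> l = mas_field S R (x \<tau>) l - mas_field S R (y \<tau>) l" for \<tau> l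
  define d' where "d' \<tau> = (\<Sum>l\<in>S. 2 * e \<tau> l * \<Delta> \<tau> l)" for \<tau>
  have cd: "continuous_on {0..t} d" unfolding d_def e_def
    by (intro continuous_on_sum continuous_on_power continuous_on_diff cx cy)
  have dd: "(d has_real_derivative d' \<tau>) (at \<tau>)" if "0 < \<tau>" "\<tau> < t" for \<tau>
  proof -
    have "((\<lambda>\<tau>. (e \<tau> l)^2) has_real_derivative 2 * e \<tau> l * \<Delta> \<tau> l) (at \<tau>)" if l: "l \<in> S" for l
    proof -
      have hx: "((\<lambda>\<tau>. x \<tau> l) has_real_derivative mas_field S R (x \<tau>) l) (at \<tau>)"
        using dx[OF l] \<open>0 < \<tau>\<close> by (intro within_to_at) auto
      have hy: "((\<lambda>\<tau>. y \<tau> l) has_real_derivative mas_field S R (y \<tau>) l) (at \<tau>)"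
        using dy[OF l] \<open>0 < \<tau>\<close> by (intro within_to_at) auto
      have "((\<lambda>\<tau>. (x \<tau> l - y \<tau> l)^2) has_real_derivative
          of_nat 2 * ((mas_field S R (x \<tau>) l - mas_field S R (y \<tau>) l) * (x \<tau> l - y \<tau> l) ^ (2 - Suc 0))) (at \<tau>)"
        by (intro DERIV_power DERIV_diff hx hy)
      then show ?thesis by (simp add: e_def \<Delta>_def algebra_simps)
    qed
    then show ?thesis unfolding d_def d'_def by (rule DERIV_sum)
  qed
  have le: "d' \<tau> \<le> (2 * L * real (card S)) * d \<tau>" if "0 < \<tau>" "\<tau> < t" for \<tau>
  proof -
    have b: "\<forall>i\<in>S. \<bar>x \<tau> i\<bar> \<le> B \<and> \<bar>y \<tau> i\<bar> \<le> B" using bnd that by auto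
    have "d' \<tau> \<le> (\<Sum>l\<in>S. L * (real (card S) * (e \<tau> l)^2 + d \<tau>))"
      unfolding d'_def
    proof (intro sum_mono)
      fix l assume l: "l \<in> S"
      have "2 * e \<tau> l * \<Delta> \<tau> l \<le> 2 * \<bar>e \<tau> l\<bar> * \<bar>\<Delta> \<tau> l\<bar>"
        using abs_ge_self[of "e \<tau> l * \<Delta> \<tau> l"] by (simp add: abs_mult mult.assoc)
      also have "\<dots> \<le> 2 * \<bar>e \<tau> l\<bar> * (L * (\<Sum>m\<in>S. \<bar>e \<tau> m\<bar>))"
        using L(2)[OF b] l by (intro mult_left_mono) (auto simp: \<Delta>_def e_def)
      also have "\<dots> = L * (\<Sum>m\<in>S. 2 * \<bar>e \<tau> l\<bar> * \<bar>e \<tau> m\<bar>)"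
        unfolding sum_distrib_left[symmetric] by (simp add: mult_ac)
      also have "\<dots> \<le> L * (\<Sum>m\<in>S. (e \<tau> l)^2 + (e \<tau> m)^2)"
      proof (intro mult_left_mono sum_mono L(1))
        fix m
        have "0 \<le> (\<bar>e \<tau> l\<bar> - \<bar>e \<tau> m\<bar>)^2" by simp
        then show "2 * \<bar>e \<tau> l\<bar> * \<bar>e \<tau> m\<bar> \<le> (e \<tau> l)^2 + (e \<tau> m)^2"
          by (simp add: power2_eq_square algebra_simps)
      qed
      also have "\<dots> = L * (real (card S) * (e \<tau> l)^2 + d \<tau>)"
        by (simp add: sum.distrib d_def)
      finally show "2 * e \<tau> l * \<Delta> \<tau> l \<le> L * (real (card S) * (e \<tau> l)^2 + d \<tau>)" .
    qed
    also have "\<dots> = L * (\<Sum>l\<in>S. real (card S) * (e \<tau> l)^2 + d \<tau>)"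
      by (rule sum_distrib_left[symmetric])
    also have "(\<Sum>l\<in>S. real (card S) * (e \<tau> l)^2 + d \<tau>) = real (card S) * d \<tau> + real (card S) * d \<tau>"
      by (simp add: sum.distrib sum_distrib_left[symmetric] d_def)
    also have "L * (real (card S) * d \<tau> + real (card S) * d \<tau>) = (2 * L * real (card S)) * d \<tau>"
      by (simp add: algebra_simps)
    finally show ?thesis .
  qed
  have d0: "d 0 = 0" unfolding d_def e_def using init by simp
  have nn: "d \<tau> \<ge> 0" for \<tau> unfolding d_def by (simp add: sum_nonneg)
  have "d t = 0" by (rule gronwall_zero[OF T cd dd le d0 nn])
  then have "\<forall>l\<in>S. (e t l)^2 = 0" unfolding d_def using fin by (subst (asm) sum_nonneg_eq_0_iff) auto
  then show ?thesis using i by (simp add: e_def)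
qed

definition gm :: "int \<Rightarrow> real \<Rightarrow> real" where
  "gm m u = (if m > 0 then (\<Sum>i\<in>{0..m - 1}. u powi i)
             else if m < 0 then - (\<Sum>i\<in>{m..-1}. u powi i) else 0)"

definition wf :: "int \<Rightarrow> real \<Rightarrow> real" where
  "wf m u = (if m > 0 then real_of_int m else real_of_int m / u)"

lemma sum_if_filter: "(\<Sum>j<(n::nat). if P j then g j else 0) = sum g {j. j < n \<and> P j}"
proof -
  have "sum g {j. j < n \<and> P j} = sum g {x\<in>{..<n}. P x}" by (rule sum.cong) auto
  also have "\<dots> = (\<Sum>j<n. if P j then g j else 0)" using sum.inter_filter[of "{..<n}" g P] by simp
  finally show ?thesis by simp
qed

lemma G_alt:
  "G_fun Y R K m y u = (\<Sum>j<length R. K j * monom Y y (fst (R ! j)) * gm (m j) u)"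
proof -
  let ?f = "\<lambda>j. K j * monom Y y (fst (R ! j))"
  have "(\<Sum>j<length R. ?f j * gm (m j) u)
      = (\<Sum>j<length R. (if m j > 0 then ?f j * (\<Sum>i\<in>{0..m j - 1}. u powi i) else 0)
                      + (if m j < 0 then ?f j * (- (\<Sum>i\<in>{m j..-1}. u powi i)) else 0))"
    by (intro sum.cong) (auto simp: gm_def)
  also have "\<dots> = (\<Sum>j<length R. if m j > 0 then ?f j * (\<Sum>i\<in>{0..m j - 1}. u powi i) else 0)
                + (\<Sum>j<length R. if m j < 0 then ?f j * (- (\<Sum>i\<in>{m j..-1}. u powi i)) else 0)"
    by (rule sum.distrib)
  also have "\<dots> = G_fun Y R K m y u"
    unfolding G_fun_def sum_if_filter by simp
  finally show ?thesis by simp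
qed

lemma gm_one: "gm m 1 = real_of_int m"
proof -
  have "card {0..m - 1} = nat m" by simp
  moreover have "card {m..-1} = nat (- m)" by simp
  ultimately show ?thesis by (auto simp: gm_def)
qed

lemma gm_mono:
  assumes "0 < u1" "u1 \<le> u2"
  shows "gm m u1 \<le> gm m u2"
proof -
  have a: "(\<Sum>i\<in>{0..m - 1}. u1 powi i) \<le> (\<Sum>i\<in>{0..m - 1}. u2 powi i)"
    using assms by (intro sum_mono power_int_mono) auto
  have b: "(\<Sum>i\<in>{m..-1}. u2 powi i) \<le> (\<Sum>i\<in>{m..-1}. u1 powi i)"
    using assms by (intro sum_mono power_int_antimono) auto
  show ?thesis using a b by (auto simp: gm_def)
qed

lemma gm_strict:
  assumes "0 < u1" "u1 < u2" "m < 0"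
  shows "gm m u1 < gm m u2"
proof -
  have mem: "-1 \<in> {m..-1}" using assms by auto
  have s: "(\<Sum>i\<in>{m..-1}. u powi i) = u powi (-1) + (\<Sum>i\<in>{m..-1} - {-1}. u powi i)" for u :: real
    by (rule sum.remove) (use mem in auto)
  have b: "(\<Sum>i\<in>{m..-1} - {-1}. u2 powi i) \<le> (\<Sum>i\<in>{m..-1} - {-1}. u1 powi i)"
    using assms by (intro sum_mono power_int_antimono) auto
  have c: "inverse u2 < inverse u1" using assms by (intro less_imp_inverse_less) auto
  have e: "gm m u = - inverse u - (\<Sum>i\<in>{m..-1} - {-1}. u powi i)" for u
    using assms by (simp add: gm_def s power_int_minus)
  show ?thesis using b c e[of u1] e[of u2] by linarith
qed

lemma gm_ge_wf:
  assumes "u \<ge> 1"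
  shows "gm m u \<ge> wf m u"
proof -
  have a: "(\<Sum>i\<in>{0..m - 1}. (1::real)) \<le> (\<Sum>i\<in>{0..m - 1}. u powi i)"
  proof (intro sum_mono)
    fix i assume "i \<in> {0..m-1}"
    then have "u powi 0 \<le> u powi i" using assms by (intro power_int_increasing) auto
    then show "1 \<le> u powi i" by simp
  qed
  have b: "(\<Sum>i\<in>{m..-1}. u powi i) \<le> (\<Sum>i\<in>{m..-1}. u powi (-1))"
    using assms by (intro sum_mono power_int_increasing) auto
  show ?thesis
  proof (cases "m > 0")
    case True then show ?thesis using a by (simp add: gm_def wf_def)
  next
    case False
    show ?thesis
    proof (cases "m < 0")
      case True
      have "(\<Sum>i\<in>{m..-1}. u powi (-1)) = real (nat (-m)) * inverse u" by (simp add: power_int_minus)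
      also have "\<dots> = - real_of_int m / u" using True by (simp add: field_simps)
      finally show ?thesis using b True False by (simp add: gm_def wf_def)
    next
      case False2: False
      then show ?thesis using False by (simp add: gm_def wf_def)
    qed
  qed
qed

lemma gm_le_wf:
  assumes "0 < u" "u \<le> 1"
  shows "gm m u \<le> wf m u"
proof -
  have a: "(\<Sum>i\<in>{0..m - 1}. u powi i) \<le> (\<Sum>i\<in>{0..m - 1}. (1::real))"
  proof (intro sum_mono)
    fix i assume "i \<in> {0..m-1}"
    then have "u powi i \<le> u powi 0" using assms by (intro power_int_decreasing) auto
    then show "u powi i \<le> 1" by simp
  qed
  have b: "(\<Sum>i\<in>{m..-1}. u powi (-1)) \<le> (\<Sum>i\<in>{m..-1}. u powi i)"
    using assms by (intro sum_mono power_int_decreasing) auto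
  show ?thesis
  proof (cases "m > 0")
    case True then show ?thesis using a by (simp add: gm_def wf_def)
  next
    case False
    show ?thesis
    proof (cases "m < 0")
      case True
      have "(\<Sum>i\<in>{m..-1}. u powi (-1)) = real (nat (-m)) * inverse u" by (simp add: power_int_minus)
      also have "\<dots> = - real_of_int m / u" using True by (simp add: field_simps)
      finally show ?thesis using b True False by (simp add: gm_def wf_def)
    next
      case False2: False
      then show ?thesis using False by (simp add: gm_def wf_def)
    qed
  qed
qed

definition Dm :: "'s set \<Rightarrow> ('s \<Rightarrow> real) \<Rightarrow> 's complex \<Rightarrow> 's \<Rightarrow> real" where
  "Dm Y y v i = real (v i) * y i ^ (v i - 1) * (\<Prod>l\<in>Y - {i}. y l ^ v l)"

lemma monom_upd:
  assumes "finite Y" "i \<in> Y"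
  shows "monom Y (y(i:=x)) v = x ^ v i * (\<Prod>l\<in>Y - {i}. y l ^ v l)"
proof -
  have "monom Y (y(i:=x)) v = (y(i:=x)) i ^ v i * (\<Prod>l\<in>Y - {i}. (y(i:=x)) l ^ v l)"
    unfolding monom_def using assms by (rule prod.remove)
  also have "(\<Prod>l\<in>Y - {i}. (y(i:=x)) l ^ v l) = (\<Prod>l\<in>Y - {i}. y l ^ v l)"
    by (rule prod.cong) auto
  also have "(y(i:=x)) i = x" by simp
  finally show ?thesis .
qed

lemma monom_partial:
  assumes "finite Y" "i \<in> Y"
  shows "((\<lambda>x. monom Y (y(i:=x)) v) has_real_derivative Dm Y y v i) (at (y i))"
proof -
  have "((\<lambda>x. x ^ v i * (\<Prod>l\<in>Y - {i}. y l ^ v l)) has_real_derivative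
         real (v i) * y i ^ (v i - Suc 0) * (\<Prod>l\<in>Y - {i}. y l ^ v l)) (at (y i))"
    by (intro DERIV_cmult_right DERIV_pow)
  then show ?thesis using monom_upd[OF assms] by (simp add: Dm_def)
qed

lemma monom_line:
  assumes "finite Y"
  shows "((\<lambda>s. monom Y (\<lambda>i. a i + s * w i) v) has_real_derivative
          (\<Sum>i\<in>Y. w i * Dm Y (\<lambda>i. a i + s * w i) v i)) (at s)"
proof -
  have d: "((\<lambda>u. (a x + u * w x) ^ v x) has_real_derivative
           of_nat (v x) * (w x * (a x + s * w x) ^ (v x - Suc 0))) (at s)" for x
  proof -
    have "((\<lambda>u. a x + u * w x) has_real_derivative w x) (at s)"
      by (rule derivative_eq_intros refl | simp)+
    then show ?thesis by (rule DERIV_power)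
  qed
  have "((\<lambda>u. \<Prod>x\<in>Y. (a x + u * w x) ^ v x) has_real_derivative
     (\<Sum>x\<in>Y. of_nat (v x) * (w x * (a x + s * w x) ^ (v x - Suc 0)) * (\<Prod>y\<in>Y - {x}. (a y + s * w y) ^ v y))) (at s)"
    by (rule has_field_derivative_prod) (rule d)
  moreover have "(\<Sum>x\<in>Y. of_nat (v x) * (w x * (a x + s * w x) ^ (v x - Suc 0)) * (\<Prod>y\<in>Y - {x}. (a y + s * w y) ^ v y))
      = (\<Sum>i\<in>Y. w i * Dm Y (\<lambda>i. a i + s * w i) v i)"
    by (intro sum.cong) (auto simp: Dm_def)
  ultimately show ?thesis by (simp add: monom_def)
qed

lemma G_partial:
  assumes "finite Y" "i \<in> Y"
  shows "((\<lambda>x. G_fun Y R K m (y(i:=x)) u) has_real_derivative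
          (\<Sum>j<length R. K j * Dm Y y (fst (R ! j)) i * gm (m j) u)) (at (y i))"
  unfolding G_alt
  by (intro DERIV_sum DERIV_cmult_right DERIV_cmult monom_partial assms)

lemma omega_dG_eq:
  assumes "finite Y"
  shows "omega_dG Y (G_fun Y R K m) \<omega> y u =
     (\<Sum>i\<in>Y. \<omega> $ i * (\<Sum>j<length R. K j * Dm Y y (fst (R ! j)) i * gm (m j) u))"
  unfolding omega_dG_def
  by (intro sum.cong refl arg_cong2[where f = "(*)"] DERIV_imp_deriv G_partial assms)

lemma G_line:
  assumes "finite Y"
  shows "((\<lambda>s. G_fun Y R K m (\<lambda>i. a i + s * \<omega> $ i) u) has_real_derivative
          omega_dG Y (G_fun Y R K m) \<omega> (\<lambda>i. a i + s * \<omega> $ i) u) (at s)"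
proof -
  let ?y = "\<lambda>i. a i + s * \<omega> $ i"
  have "((\<lambda>s. G_fun Y R K m (\<lambda>i. a i + s * \<omega> $ i) u) has_real_derivative
     (\<Sum>j<length R. K j * (\<Sum>i\<in>Y. \<omega> $ i * Dm Y ?y (fst (R ! j)) i) * gm (m j) u)) (at s)"
    unfolding G_alt
    by (intro DERIV_sum DERIV_cmult_right DERIV_cmult monom_line[where w = "\<lambda>i. \<omega> $ i"] assms)
  moreover have "(\<Sum>j<length R. K j * (\<Sum>i\<in>Y. \<omega> $ i * Dm Y ?y (fst (R ! j)) i) * gm (m j) u)
     = (\<Sum>i\<in>Y. \<omega> $ i * (\<Sum>j<length R. K j * Dm Y ?y (fst (R ! j)) i * gm (m j) u))"
    by (simp add: sum_distrib_left sum_distrib_right sum.swap[of _ Y] mult_ac)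
  ultimately show ?thesis using omega_dG_eq[OF assms] by simp
qed

lemma monom_cong: "(\<And>i. i \<in> Y \<Longrightarrow> a i = b i) \<Longrightarrow> monom Y a v = monom Y b v"
  unfolding monom_def by (rule prod.cong) auto

lemma monom_split:
  assumes "finite S" "X \<subseteq> S"
  shows "monom S z v = monom X z v * monom (S - X) z v"
proof -
  have "S = X \<union> (S - X)" using assms by auto
  then have "monom S z v = monom (X \<union> (S - X)) z v" by simp
  also have "\<dots> = monom X z v * monom (S - X) z v"
    unfolding monom_def using assms by (intro prod.union_disjoint) (auto intro: finite_subset)
  finally show ?thesis .
qed

lemma monom_pos: "(\<And>i. i \<in> Y \<Longrightarrow> z i > 0) \<Longrightarrow> monom Y z v > 0"
  unfolding monom_def by (intro prod_pos) auto

lemma monom_nonneg: "(\<And>i. i \<in> Y \<Longrightarrow> z i \<ge> 0) \<Longrightarrow> monom Y z v \<ge> 0"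
  unfolding monom_def by (intro prod_nonneg) auto

lemma monom_mono: "(\<And>i. i \<in> Y \<Longrightarrow> 0 \<le> r i \<and> r i \<le> z i) \<Longrightarrow> monom Y r v \<le> monom Y z v"
  unfolding monom_def by (intro prod_mono) (auto intro: power_mono)

lemma monom_tendsto:
  assumes "\<And>i. i \<in> Y \<Longrightarrow> ((\<lambda>t. z t i) \<longlongrightarrow> a i) F"
  shows "((\<lambda>t. monom Y (z t) v) \<longlongrightarrow> monom Y a v) F"
  unfolding monom_def using assms by (intro tendsto_prod tendsto_power) auto

lemma field_form:
  assumes i: "i \<in> Y" and Yd: "Y = S - X"
    and pm: "\<forall>j<length R. proj_rvec Y (R ! j) = of_int (m j) *\<^sub>R \<omega>"
  shows "mas_field S R z i = \<omega> $ i *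
     (\<Sum>j<length R. of_int (m j) * snd (snd (R!j)) * monom S z (fst (R!j)))"
proof -
  have "real (fst (snd (R!j)) i) - real (fst (R!j) i) = of_int (m j) * \<omega> $ i" if "j < length R" for j
  proof -
    have "proj_rvec Y (R ! j) $ i = of_int (m j) * \<omega> $ i" using pm that by simp
    then show ?thesis using i by (simp add: proj_rvec_def)
  qed
  then show ?thesis unfolding mas_field_nth sum_distrib_left
    by (intro sum.cong) (auto simp: mult_ac)
qed

lemma linearize:
  fixes z :: "real \<Rightarrow> 's::finite \<Rightarrow> real"
  assumes sol: "ode_sol Y F z" and lin: "\<And>i y. i \<in> Y \<Longrightarrow> F y i = \<omega> $ i * \<Phi> y"
    and i0: "i0 \<in> Y" "\<omega> $ i0 \<noteq> 0"
  shows "\<forall>t\<ge>0. \<forall>i\<in>Y. z t i = z 0 i + \<omega> $ i * ((z t i0 - z 0 i0) / \<omega> $ i0)"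
    and "\<forall>t\<ge>0. ((\<lambda>t. (z t i0 - z 0 i0) / \<omega> $ i0) has_real_derivative \<Phi> (z t)) (at t within {0..})"
proof -
  have d: "\<And>i t. i \<in> Y \<Longrightarrow> t \<ge> 0 \<Longrightarrow> ((\<lambda>t. z t i) has_real_derivative \<omega> $ i * \<Phi> (z t)) (at t within {0..})"
    using sol lin unfolding ode_sol_def by metis
  show "\<forall>t\<ge>0. ((\<lambda>t. (z t i0 - z 0 i0) / \<omega> $ i0) has_real_derivative \<Phi> (z t)) (at t within {0..})"
  proof (intro allI impI)
    fix t :: real assume t: "t \<ge> 0"
    have "((\<lambda>t. (z t i0 - z 0 i0) / \<omega> $ i0) has_real_derivative (\<omega> $ i0 * \<Phi> (z t) - 0) / \<omega> $ i0) (at t within {0..})"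
      by (intro DERIV_cdivide DERIV_diff d i0 t DERIV_const)
    then show "((\<lambda>t. (z t i0 - z 0 i0) / \<omega> $ i0) has_real_derivative \<Phi> (z t)) (at t within {0..})"
      using i0 by simp
  qed
  show "\<forall>t\<ge>0. \<forall>i\<in>Y. z t i = z 0 i + \<omega> $ i * ((z t i0 - z 0 i0) / \<omega> $ i0)"
  proof (intro allI impI ballI)
    fix t :: real and i assume t: "t \<ge> 0" and i: "i \<in> Y"
    let ?e = "\<lambda>t. z t i - \<omega> $ i / \<omega> $ i0 * z t i0"
    have "\<And>x. x \<in> {0..} \<Longrightarrow> (?e has_real_derivative 0) (at x within {0..})"
    proof -
      fix x :: real assume "x \<in> {0..}"
      then have x: "x \<ge> 0" by simp
      have "(?e has_real_derivative \<omega> $ i * \<Phi> (z x) - \<omega> $ i / \<omega> $ i0 * (\<omega> $ i0 * \<Phi> (z x))) (at x within {0..})"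
        by (intro DERIV_diff DERIV_cmult d i i0 x)
      then show "(?e has_real_derivative 0) (at x within {0..})" using i0 by simp
    qed
    from has_field_derivative_zero_constant[OF convex_real_interval(1) this]
    obtain C where "\<forall>x\<in>{0..}. ?e x = C" by blast
    then have "?e t = ?e 0" using t by auto
    then show "z t i = z 0 i + \<omega> $ i * ((z t i0 - z 0 i0) / \<omega> $ i0)"
      using i0 by (simp add: field_simps)
  qed
qed

lemma up_bound:
  fixes n :: nat and m :: "nat \<Rightarrow> int" and k K M :: "nat \<Rightarrow> real"
  assumes K: "\<forall>j<n. K j > 0" and M: "\<forall>j<n. M j \<ge> 0" and u0: "u0 \<ge> 1" and eps: "\<epsilon> \<ge> 0"
    and Gle: "(\<Sum>j<n. K j * M j * wf (m j) u0) \<le> 0"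
    and kb: "\<forall>j<n. (m j > 0 \<longrightarrow> k j \<le> (1+\<epsilon>) * K j) \<and> (m j < 0 \<longrightarrow> (1-\<epsilon>) * K j \<le> k j)"
    and jm: "jm < n" "m jm < 0"
    and gam: "\<gamma> = (1-\<epsilon>) - (1+\<epsilon>)/u0" "\<gamma> \<ge> 0"
  shows "(\<Sum>j<n. of_int (m j) * k j * M j) \<le> - \<gamma> * K jm * M jm"
proof -
  let ?t = "\<lambda>j. (1+\<epsilon>) * (K j * M j * wf (m j) u0) + (if m j < 0 then \<gamma> * of_int (m j) * K j * M j else 0)"
  have trm: "of_int (m j) * k j * M j \<le> ?t j" if j: "j < n" for j
  proof (cases "m j > 0")
    case True
    have "of_int (m j) * k j * M j \<le> of_int (m j) * ((1+\<epsilon>) * K j) * M j"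
      using kb j True M by (intro mult_right_mono mult_left_mono) auto
    then show ?thesis using True by (simp add: wf_def mult_ac)
  next
    case False
    show ?thesis
    proof (cases "m j = 0")
      case True then show ?thesis by (simp add: wf_def)
    next
      case False2: False
      then have neg: "m j < 0" using False by simp
      have "of_int (m j) * k j * M j \<le> of_int (m j) * ((1-\<epsilon>) * K j) * M j"
        using kb j neg M by (intro mult_right_mono mult_left_mono_neg) auto
      also have "\<dots> = (K j * M j * of_int (m j)) * (1 - \<epsilon>)" by (simp add: mult_ac)
      also have "\<dots> = (K j * M j * of_int (m j)) * ((1+\<epsilon>)/u0 + \<gamma>)" using gam(1) by simp
      also have "\<dots> = ?t j" using neg by (simp add: wf_def algebra_simps)
      finally show ?thesis .
    qed
  qed
  have "(\<Sum>j<n. of_int (m j) * k j * M j) \<le> (\<Sum>j<n. ?t j)" using trm by (intro sum_mono) auto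
  also have "\<dots> = (1+\<epsilon>) * (\<Sum>j<n. K j * M j * wf (m j) u0) + (\<Sum>j<n. if m j < 0 then \<gamma> * of_int (m j) * K j * M j else 0)"
    by (simp add: sum.distrib sum_distrib_left)
  also have "\<dots> \<le> 0 + (\<Sum>j<n. if m j < 0 then \<gamma> * of_int (m j) * K j * M j else 0)"
    using Gle eps by (intro add_right_mono mult_nonneg_nonpos) auto
  also have "(\<Sum>j<n. if m j < 0 then \<gamma> * of_int (m j) * K j * M j else 0) \<le> \<gamma> * of_int (m jm) * K jm * M jm"
  proof -
    have nonpos: "(if m j < 0 then \<gamma> * of_int (m j) * K j * M j else 0) \<le> 0" if "j < n" for j
    proof -
      have "\<gamma> * (K j * M j) \<ge> 0" using gam K M that by (intro mult_nonneg_nonneg) auto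
      then have "m j < 0 \<Longrightarrow> \<gamma> * (K j * M j) * of_int (m j) \<le> 0" by (intro mult_nonneg_nonpos) auto
      then show ?thesis by (auto simp: mult_ac)
    qed
    have "(\<Sum>j<n. if m j < 0 then \<gamma> * of_int (m j) * K j * M j else 0)
        = (if m jm < 0 then \<gamma> * of_int (m jm) * K jm * M jm else 0) + (\<Sum>j\<in>{..<n} - {jm}. if m j < 0 then \<gamma> * of_int (m j) * K j * M j else 0)"
      using jm by (intro sum.remove) auto
    also have "(\<Sum>j\<in>{..<n} - {jm}. if m j < 0 then \<gamma> * of_int (m j) * K j * M j else 0) \<le> 0"
      using nonpos by (intro sum_nonpos) auto
    finally show ?thesis using jm by simp
  qed
  also have "\<gamma> * of_int (m jm) * K jm * M jm \<le> - \<gamma> * K jm * M jm"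
  proof -
    have "of_int (m jm) \<le> (-1::real)" using jm by simp
    moreover have "\<gamma> * K jm * M jm \<ge> 0" using gam K M jm by (intro mult_nonneg_nonneg) auto
    ultimately have "of_int (m jm) * (\<gamma> * K jm * M jm) \<le> (-1) * (\<gamma> * K jm * M jm)"
      by (intro mult_right_mono) auto
    then show ?thesis by (simp add: mult_ac)
  qed
  finally show ?thesis by simp
qed

lemma low_bound:
  fixes n :: nat and m :: "nat \<Rightarrow> int" and k K M :: "nat \<Rightarrow> real"
  assumes K: "\<forall>j<n. K j > 0" and M: "\<forall>j<n. M j \<ge> 0" and u1: "0 < u1" and eps: "\<epsilon> \<ge> 0" "\<epsilon> \<le> 1"
    and Gge: "(\<Sum>j<n. K j * M j * wf (m j) u1) \<ge> 0"
    and kb: "\<forall>j<n. (m j > 0 \<longrightarrow> (1-\<epsilon>) * K j \<le> k j) \<and> (m j < 0 \<longrightarrow> k j \<le> (1+\<epsilon>) * K j)"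
    and jm: "jm < n" "m jm < 0"
    and gam: "\<gamma> = (1-\<epsilon>)/u1 - (1+\<epsilon>)" "\<gamma> \<ge> 0"
  shows "(\<Sum>j<n. of_int (m j) * k j * M j) \<ge> \<gamma> * K jm * M jm"
proof -
  let ?t = "\<lambda>j. (1-\<epsilon>) * (K j * M j * wf (m j) u1) + (if m j < 0 then - \<gamma> * of_int (m j) * K j * M j else 0)"
  have trm: "?t j \<le> of_int (m j) * k j * M j" if j: "j < n" for j
  proof (cases "m j > 0")
    case True
    have "of_int (m j) * ((1-\<epsilon>) * K j) * M j \<le> of_int (m j) * k j * M j"
      using kb j True M by (intro mult_right_mono mult_left_mono) auto
    then show ?thesis using True by (simp add: wf_def mult_ac)
  next
    case False
    show ?thesis
    proof (cases "m j = 0")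
      case True then show ?thesis by (simp add: wf_def)
    next
      case False2: False
      then have neg: "m j < 0" using False by simp
      have "?t j = (K j * M j * of_int (m j)) * ((1-\<epsilon>)/u1 - \<gamma>)" using neg by (simp add: wf_def algebra_simps)
      also have "\<dots> = (K j * M j * of_int (m j)) * (1 + \<epsilon>)" using gam(1) by simp
      also have "\<dots> = of_int (m j) * ((1+\<epsilon>) * K j) * M j" by (simp add: mult_ac)
      also have "\<dots> \<le> of_int (m j) * k j * M j"
        using kb j neg M by (intro mult_right_mono mult_left_mono_neg) auto
      finally show ?thesis .
    qed
  qed
  have "\<gamma> * K jm * M jm \<le> - \<gamma> * of_int (m jm) * K jm * M jm"
  proof -
    have "of_int (m jm) \<le> (-1::real)" using jm by simp
    moreover have "\<gamma> * K jm * M jm \<ge> 0" using gam K M jm by (intro mult_nonneg_nonneg) auto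
    ultimately have "of_int (m jm) * (\<gamma> * K jm * M jm) \<le> (-1) * (\<gamma> * K jm * M jm)"
      by (intro mult_right_mono) auto
    then show ?thesis by (simp add: mult_ac)
  qed
  also have "\<dots> \<le> (\<Sum>j<n. if m j < 0 then - \<gamma> * of_int (m j) * K j * M j else 0)"
  proof -
    have nonneg: "(if m j < 0 then - \<gamma> * of_int (m j) * K j * M j else 0) \<ge> 0" if "j < n" for j
    proof -
      have "\<gamma> * (K j * M j) \<ge> 0" using gam K M that by (intro mult_nonneg_nonneg) auto
      then have "m j < 0 \<Longrightarrow> \<gamma> * (K j * M j) * of_int (m j) \<le> 0" by (intro mult_nonneg_nonpos) auto
      then show ?thesis by (auto simp: mult_ac)
    qed
    have "(if m jm < 0 then - \<gamma> * of_int (m jm) * K jm * M jm else 0) \<le> (\<Sum>j<n. if m j < 0 then - \<gamma> * of_int (m j) * K j * M j else 0)"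
      using jm nonneg by (intro member_le_sum) auto
    then show ?thesis using jm by simp
  qed
  also have "\<dots> = 0 + (\<Sum>j<n. if m j < 0 then - \<gamma> * of_int (m j) * K j * M j else 0)" by simp
  also have "\<dots> \<le> (1-\<epsilon>) * (\<Sum>j<n. K j * M j * wf (m j) u1) + (\<Sum>j<n. if m j < 0 then - \<gamma> * of_int (m j) * K j * M j else 0)"
    using Gge eps by (intro add_right_mono mult_nonneg_nonneg) auto
  also have "\<dots> = (\<Sum>j<n. ?t j)"
    by (simp add: sum.distrib sum_distrib_left)
  also have "\<dots> \<le> (\<Sum>j<n. of_int (m j) * k j * M j)" using trm by (intro sum_mono) auto
  finally show ?thesis .
qed

theorem theorem5p5:
  fixes S1 X1 S2 X2 :: "'s::finite set"
    and R1 R2 :: "'s rxn list"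
    and c10 y20 ybar1 ybar2 :: "'s \<Rightarrow> real"
    and traj1 traj2 c :: "real \<Rightarrow> 's \<Rightarrow> real"
  assumes crc1: "is_msCRC S1 R1 X1"
    and crc2: "is_msCRC S2 R2 X2"
    and comp: "composable S1 X1 S2 X2"
    \<comment> \<open>(A.1)+(A.2) for C^1: the solution from (x1_0, y1_0) has y1(t) -> ybar1\<close>
    and A1_1: "ode_sol S1 (mas_field S1 R1) traj1" "\<forall>i\<in>S1. traj1 0 i = c10 i"
    and A2_1: "\<forall>i\<in>S1 - X1. ((\<lambda>t. traj1 t i) \<longlongrightarrow> ybar1 i) at_top"
    \<comment> \<open>(A.1)+(A.2) for C^2 with input frozen at ybar1: y2(t) -> ybar2\<close>
    and A1_2: "ode_sol (S2 - X2) (mas_field S2 R2) traj2"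
      "\<forall>t\<ge>0. \<forall>i\<in>X2. traj2 t i = ybar1 i" "\<forall>i\<in>S2 - X2. traj2 0 i = y20 i"
    and A2_2: "\<forall>i\<in>S2 - X2. ((\<lambda>t. traj2 t i) \<longlongrightarrow> ybar2 i) at_top"
    and pos1: "\<forall>i\<in>S1 - X1. ybar1 i > 0"
    and pos2: "\<forall>i\<in>S2 - X2. ybar2 i > 0"
    \<comment> \<open>(1): the reduced system of C^2 has one-dimensional stoichiometric subspace\<close>
    and dim1: "dim (reduced_stoich (S2 - X2) R2) = 1"
    \<comment> \<open>(2)\<close>
    and cond2: "\<exists>(\<omega>::real^'s) (m::nat \<Rightarrow> int) (ut::('s \<Rightarrow> real) \<Rightarrow> real).
        \<omega> \<noteq> 0 \<and> (\<forall>i. i \<notin> S2 - X2 \<longrightarrow> \<omega> $ i = 0)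
      \<and> span {\<omega>} = reduced_stoich (S2 - X2) R2
      \<and> (\<forall>j<length R2. m j \<noteq> 0 \<and> proj_rvec (S2 - X2) (R2 ! j) = of_int (m j) *\<^sub>R \<omega>)
      \<and> (\<forall>y. (\<forall>i\<in>S2 - X2. y i > 0) \<longrightarrow> ut y > 0 \<and>
             G_fun (S2 - X2) R2 (\<lambda>j. frozen_rate S2 (S2 - X2) ybar1 (R2 ! j)) m y (ut y) = 0)
      \<and> (\<forall>y. (\<forall>i\<in>S2 - X2. y i > 0) \<longrightarrow>
             omega_dG (S2 - X2)
               (G_fun (S2 - X2) R2 (\<lambda>j. frozen_rate S2 (S2 - X2) ybar1 (R2 ! j)) m)
               \<omega> y (ut y) < 0)"
    \<comment> \<open>the coupled system and its initial condition\<close>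
    and coupled: "ode_sol S1 (mas_field S1 R1) c" "ode_sol (S2 - X2) (mas_field S2 R2) c"
    and coupled_init: "\<forall>i\<in>S1. c 0 i = c10 i" "\<forall>i\<in>S2 - X2. c 0 i = y20 i"
    \<comment> \<open>(3): persistence of y2 along the coupled trajectory\<close>
    and persistent: "\<forall>i\<in>S2 - X2. Liminf at_top (\<lambda>t. ereal (c t i)) > 0"
  shows "(\<forall>i\<in>S1 - X1. ((\<lambda>t. c t i) \<longlongrightarrow> ybar1 i) at_top)
       \<and> (\<forall>i\<in>S2 - X2. ((\<lambda>t. c t i) \<longlongrightarrow> ybar2 i) at_top)"
proof -
  have finS: "finite (A :: 's set)" for A by (rule finite_subset[OF subset_UNIV]) simp
  define Y where "Y = S2 - X2"
  have X2S2: "X2 \<subseteq> S2" using crc2 by (simp add: is_msCRC_def)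
  have kpos2: "\<forall>r\<in>set R2. snd (snd r) > 0" using crc2 unfolding is_msCRC_def by fastforce
  have X2eq: "X2 = S1 - X1" using comp by (simp add: composable_def)
  have eq1: "\<forall>t\<ge>0. \<forall>i\<in>S1. c t i = traj1 t i"
    using ode_unique[OF finS coupled(1) A1_1(1)] coupled_init(1) A1_1(2) by auto
  have conv1: "\<forall>i\<in>S1 - X1. ((\<lambda>t. c t i) \<longlongrightarrow> ybar1 i) at_top"
  proof
    fix i assume i: "i \<in> S1 - X1"
    have "eventually (\<lambda>t. traj1 t i = c t i) at_top"
      by (rule eventually_mono[OF eventually_ge_at_top[of "0::real"]]) (use eq1 i in auto)
    then show "((\<lambda>t. c t i) \<longlongrightarrow> ybar1 i) at_top"
      using A2_1 i tendsto_cong by fastforce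
  qed
  define KK where "KK j = frozen_rate S2 Y ybar1 (R2 ! j)" for j
  obtain \<omega> m ut where om: "\<omega> \<noteq> 0" "\<forall>i. i \<notin> Y \<longrightarrow> \<omega> $ i = 0"
     and pm: "\<forall>j<length R2. m j \<noteq> 0 \<and> proj_rvec Y (R2!j) = of_int (m j) *\<^sub>R \<omega>"
     and utp: "\<forall>y. (\<forall>i\<in>Y. y i > 0) \<longrightarrow> ut y > 0 \<and> G_fun Y R2 KK m y (ut y) = 0"
     and dneg: "\<forall>y. (\<forall>i\<in>Y. y i > 0) \<longrightarrow> omega_dG Y (G_fun Y R2 KK m) \<omega> y (ut y) < 0"
    using cond2 unfolding Y_def[symmetric] KK_def[abs_def] by blast
  obtain i0 where i0: "i0 \<in> Y" "\<omega> $ i0 \<noteq> 0"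
    using om(1,2) by (metis vec_eq_iff zero_index)
  define \<omega>0 where "\<omega>0 = \<omega> $ i0"
  define n where "n = length R2"
  define v where "v j = fst (R2 ! j)" for j
  define \<kappa> where "\<kappa> j = snd (snd (R2 ! j))" for j
  have \<kappa>pos: "\<forall>j<n. \<kappa> j > 0" using kpos2 by (auto simp: \<kappa>_def n_def)
  have SY: "S2 - Y = X2" using X2S2 by (auto simp: Y_def)
  have KK_eq: "KK j = \<kappa> j * monom X2 ybar1 (v j)" for j
    by (simp add: KK_def frozen_rate_def SY \<kappa>_def v_def)
  have KKpos: "\<forall>j<n. KK j > 0"
  proof (intro allI impI)
    fix j assume "j < n"
    moreover have "monom X2 ybar1 (v j) > 0" using pos1 X2eq by (intro monom_pos) auto
    ultimately show "KK j > 0" using \<kappa>pos by (simp add: KK_eq)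
  qed
  have msplit: "monom S2 z w = monom X2 z w * monom Y z w" for z w
    unfolding Y_def by (rule monom_split[OF finS X2S2])
  define \<Phi> where "\<Phi> z = (\<Sum>j<n. of_int (m j) * \<kappa> j * monom S2 z (v j))" for z
  have lin: "\<And>i z. i \<in> Y \<Longrightarrow> mas_field S2 R2 z i = \<omega> $ i * \<Phi> z"
    unfolding \<Phi>_def n_def \<kappa>_def v_def
    by (rule field_form[OF _ Y_def]) (use pm in auto)
  have solc: "ode_sol Y (mas_field S2 R2) c" using coupled(2) by (simp add: Y_def)
  have solt: "ode_sol Y (mas_field S2 R2) traj2" using A1_2(1) by (simp add: Y_def)
  define \<sigma> where "\<sigma> t = (c t i0 - c 0 i0) / \<omega>0" for t
  define \<tau> where "\<tau> t = (traj2 t i0 - traj2 0 i0) / \<omega>0" for t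
  define P where "P s = (\<lambda>i. y20 i + s * \<omega> $ i)" for s
  have cP: "\<forall>t\<ge>0. \<forall>i\<in>Y. c t i = P (\<sigma> t) i"
    using linearize(1)[OF solc lin i0] coupled_init(2)
    by (auto simp: P_def \<sigma>_def \<omega>0_def Y_def)
  have d\<sigma>: "\<forall>t\<ge>0. (\<sigma> has_real_derivative \<Phi> (c t)) (at t within {0..})"
    using linearize(2)[OF solc lin i0] by (simp add: \<sigma>_def[abs_def] \<omega>0_def)
  have tP: "\<forall>t\<ge>0. \<forall>i\<in>Y. traj2 t i = P (\<tau> t) i"
    using linearize(1)[OF solt lin i0] A1_2(3)
    by (auto simp: P_def \<tau>_def \<omega>0_def Y_def)
  have d\<tau>: "\<forall>t\<ge>0. (\<tau> has_real_derivative \<Phi> (traj2 t)) (at t within {0..})"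
    using linearize(2)[OF solt lin i0] by (simp add: \<tau>_def[abs_def] \<omega>0_def)
  define hY where "hY z = (\<Sum>j<n. of_int (m j) * KK j * monom Y z (v j))" for z
  have \<Phi>traj: "\<Phi> (traj2 t) = hY (traj2 t)" if "t \<ge> 0" for t
  proof -
    have "monom X2 (traj2 t) w = monom X2 ybar1 w" for w
      using A1_2(2) that by (intro monom_cong) auto
    then show ?thesis unfolding \<Phi>_def hY_def msplit KK_eq by (simp add: mult_ac)
  qed
  define \<tau>s where "\<tau>s = (ybar2 i0 - y20 i0) / \<omega>0"
  have \<tau>lim: "(\<tau> \<longlongrightarrow> \<tau>s) at_top"
    unfolding \<tau>_def \<tau>s_def using A2_2 i0 A1_2(3)
    by (auto simp: Y_def \<omega>0_def intro!: tendsto_intros)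
  have ybar2P: "\<forall>i\<in>Y. ybar2 i = P \<tau>s i"
  proof
    fix i assume i: "i \<in> Y"
    have "eventually (\<lambda>t. P (\<tau> t) i = traj2 t i) at_top"
      by (rule eventually_mono[OF eventually_ge_at_top[of "0::real"]]) (use tP i in auto)
    moreover have "((\<lambda>t. P (\<tau> t) i) \<longlongrightarrow> P \<tau>s i) at_top"
      unfolding P_def by (intro tendsto_intros \<tau>lim)
    ultimately have "((\<lambda>t. traj2 t i) \<longlongrightarrow> P \<tau>s i) at_top" using tendsto_cong by fastforce
    moreover have "((\<lambda>t. traj2 t i) \<longlongrightarrow> ybar2 i) at_top" using A2_2 i by (simp add: Y_def)
    ultimately show "ybar2 i = P \<tau>s i" by (intro tendsto_unique[OF trivial_limit_at_top_linorder]) auto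
  qed
  have hYlim: "((\<lambda>t. hY (traj2 t)) \<longlongrightarrow> hY ybar2) at_top"
    unfolding hY_def using A2_2
    by (intro tendsto_intros monom_tendsto) (auto simp: Y_def)
  have h0: "hY ybar2 = 0"
  proof -
    have "eventually (\<lambda>t. hY (traj2 t) = \<Phi> (traj2 t)) at_top"
      by (rule eventually_mono[OF eventually_ge_at_top[of "0::real"]]) (use \<Phi>traj in auto)
    then have "((\<lambda>t. \<Phi> (traj2 t)) \<longlongrightarrow> hY ybar2) at_top" using hYlim tendsto_cong by fastforce
    then show ?thesis by (rule deriv_lim_zero[OF d\<tau> \<tau>lim])
  qed
  have hP0: "hY (P \<tau>s) = 0"
  proof -
    have "monom Y (P \<tau>s) w = monom Y ybar2 w" for w using ybar2P by (intro monom_cong) auto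
    then show ?thesis using h0 by (simp add: hY_def)
  qed
  have G1: "G_fun Y R2 KK m z 1 = hY z" for z
    unfolding G_alt hY_def gm_one n_def v_def by (simp add: mult_ac)
  have n1: "n \<noteq> 0"
  proof
    assume "n = 0" then have "R2 = []" by (simp add: n_def)
    then have "dim (reduced_stoich (S2 - X2) R2) = 0" by (simp add: reduced_stoich_def dim_span)
    with dim1 show False by simp
  qed
  obtain jm where jm: "jm < n" "m jm < 0"
  proof (rule ccontr)
    assume "\<not> thesis"
    then have allpos: "\<forall>j<n. m j > 0" using that pm by (force simp: n_def)
    have "hY ybar2 > 0" unfolding hY_def
    proof (rule sum_pos)
      fix j assume "j \<in> {..<n}"
      moreover have "monom Y ybar2 (v j) > 0" using pos2 by (intro monom_pos) (auto simp: Y_def)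
      ultimately show "0 < of_int (m j) * KK j * monom Y ybar2 (v j)" using allpos KKpos by simp
    qed (use n1 in auto)
    with h0 show False by simp
  qed
  define I where "I = {s. \<forall>i\<in>Y. P s i > 0}"
  have \<tau>sI: "\<tau>s \<in> I" using ybar2P pos2 by (auto simp: I_def Y_def)
  have Iconv: "s \<in> I" if "a \<in> I" "b \<in> I" "a \<le> s" "s \<le> b" for a b s
  proof -
    have "P s i > 0" if i: "i \<in> Y" for i
    proof (cases "\<omega> $ i \<ge> 0")
      case True
      have "P a i \<le> P s i" unfolding P_def using True \<open>a \<le> s\<close> by (simp add: mult_right_mono)
      moreover have "P a i > 0" using \<open>a \<in> I\<close> i by (simp add: I_def)
      ultimately show ?thesis by simp
    next
      case False
      have "P b i \<le> P s i" unfolding P_def using False \<open>s \<le> b\<close> by (simp add: mult_right_mono_neg)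
      moreover have "P b i > 0" using \<open>b \<in> I\<close> i by (simp add: I_def)
      ultimately show ?thesis by simp
    qed
    then show ?thesis by (simp add: I_def)
  qed
  have Iopen: "open I"
  proof -
    have "I = (\<Inter>i\<in>Y. {s. 0 < y20 i + s * \<omega> $ i})" by (auto simp: I_def P_def)
    moreover have "open {s. 0 < y20 i + s * \<omega> $ i}" for i
      by (intro open_Collect_less continuous_intros)
    ultimately show ?thesis using finS by (auto intro: open_INT)
  qed
  have Ipos: "\<forall>i\<in>Y. P s i > 0" if "s \<in> I" for s using that by (simp add: I_def)
  have Gsum: "G_fun Y R2 KK m z u = (\<Sum>j<n. KK j * monom Y z (v j) * gm (m j) u)" for z u
    unfolding G_alt n_def v_def by simp
  have Gmono: "G_fun Y R2 KK m z u1 \<le> G_fun Y R2 KK m z u2"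
    if "\<forall>i\<in>Y. z i > 0" "0 < u1" "u1 \<le> u2" for z u1 u2
    unfolding Gsum
  proof (intro sum_mono mult_left_mono gm_mono that(2,3))
    fix j assume "j \<in> {..<n}"
    then show "0 \<le> KK j * monom Y z (v j)" using KKpos that(1) monom_pos[of Y z] by (simp add: less_imp_le)
  qed
  have Gstrict: "G_fun Y R2 KK m z u1 < G_fun Y R2 KK m z u2"
    if z: "\<forall>i\<in>Y. z i > 0" and u: "0 < u1" "u1 < u2" for z u1 u2
  proof -
    have cpos: "KK j * monom Y z (v j) > 0" if "j < n" for j
      using KKpos that z monom_pos[of Y z] by simp
    have "(\<Sum>j\<in>{..<n} - {jm}. KK j * monom Y z (v j) * gm (m j) u1) \<le> (\<Sum>j\<in>{..<n} - {jm}. KK j * monom Y z (v j) * gm (m j) u2)"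
      using cpos u by (intro sum_mono mult_left_mono gm_mono) (auto simp: less_imp_le)
    moreover have "KK jm * monom Y z (v jm) * gm (m jm) u1 < KK jm * monom Y z (v jm) * gm (m jm) u2"
      using cpos[OF jm(1)] u jm by (intro mult_strict_left_mono gm_strict) auto
    ultimately show ?thesis unfolding Gsum using jm by (simp add: sum.remove)
  qed
  define U where "U s = ut (P s)" for s
  have Uprop: "U s > 0" "G_fun Y R2 KK m (P s) (U s) = 0"
     "omega_dG Y (G_fun Y R2 KK m) \<omega> (P s) (U s) < 0" if "s \<in> I" for s
    using utp dneg Ipos[OF that] by (auto simp: U_def)
  have U1: "U \<tau>s = 1"
  proof (rule ccontr)
    assume ne: "U \<tau>s \<noteq> 1"
    have z: "\<forall>i\<in>Y. P \<tau>s i > 0" using Ipos[OF \<tau>sI] .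
    have "G_fun Y R2 KK m (P \<tau>s) 1 = 0" using G1 hP0 by simp
    moreover have "G_fun Y R2 KK m (P \<tau>s) (U \<tau>s) = 0" using Uprop(2)[OF \<tau>sI] .
    moreover have "U \<tau>s < 1 \<or> 1 < U \<tau>s" using ne by linarith
    moreover note Gstrict[OF z, of "U \<tau>s" 1] Gstrict[OF z, of 1 "U \<tau>s"] Uprop(1)[OF \<tau>sI]
    ultimately show False by force
  qed
  have Uinc: "U a < U b" if ab: "a \<in> I" "b \<in> I" "a < b" for a b
  proof (rule local_strict_mono[OF ab(3)])
    fix x assume x: "a \<le> x" "x \<le> b"
    then have xI: "x \<in> I" using Iconv ab by blast
    let ?g = "\<lambda>s. G_fun Y R2 KK m (P s) (U x)"
    have dg: "(?g has_real_derivative omega_dG Y (G_fun Y R2 KK m) \<omega> (P x) (U x)) (at x)"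
      using G_line[where Y=Y and R=R2 and K=KK and m=m and a=y20 and s=x and \<omega>=\<omega> and u="U x", OF finS] unfolding P_def .
    have neg: "omega_dG Y (G_fun Y R2 KK m) \<omega> (P x) (U x) < 0" using Uprop(3)[OF xI] .
    have g0: "?g x = 0" using Uprop(2)[OF xI] .
    obtain d1 where d1: "d1 > 0" "\<forall>h>0. h < d1 \<longrightarrow> ?g (x + h) < ?g x"
      using DERIV_neg_dec_right[OF dg neg] by blast
    obtain d2 where d2: "d2 > 0" "\<forall>h>0. h < d2 \<longrightarrow> ?g x < ?g (x - h)"
      using DERIV_neg_dec_left[OF dg neg] by blast
    obtain d3 where d3: "d3 > 0" "ball x d3 \<subseteq> I" using Iopen xI by (rule openE)
    define d where "d = min d1 (min d2 d3)"
    show "\<exists>d>0. \<forall>h. 0 < h \<and> h < d \<longrightarrow> (x + h \<le> b \<longrightarrow> U x < U (x + h)) \<and> (a \<le> x - h \<longrightarrow> U (x - h) < U x)"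
    proof (intro exI[of _ d] conjI allI impI)
      show "d > 0" using d1 d2 d3 by (simp add: d_def)
    next
      fix h assume h: "0 < h \<and> h < d"
      have hI: "x + h \<in> I" "x - h \<in> I" using h d3 by (auto simp: d_def dist_real_def subset_iff)
      show "U x < U (x + h)"
      proof (rule ccontr)
        assume "\<not> U x < U (x + h)"
        then have "G_fun Y R2 KK m (P (x+h)) (U (x+h)) \<le> ?g (x + h)"
          using Gmono[OF Ipos[OF hI(1)] Uprop(1)[OF hI(1)]] by simp
        moreover have "?g (x + h) < 0" using d1 h g0 by (auto simp: d_def)
        ultimately show False using Uprop(2)[OF hI(1)] by simp
      qed
      show "U (x - h) < U x"
      proof (rule ccontr)
        assume "\<not> U (x - h) < U x"
        then have "?g (x - h) \<le> G_fun Y R2 KK m (P (x-h)) (U (x-h))"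
          using Gmono[OF Ipos[OF hI(2)] Uprop(1)[OF xI]] by simp
        moreover have "?g (x - h) > 0" using d2 h g0 by (auto simp: d_def)
        ultimately show False using Uprop(2)[OF hI(2)] by simp
      qed
    qed
  qed
  have Uge: "U a \<le> U b" if "a \<in> I" "b \<in> I" "a \<le> b" for a b
    using Uinc[OF that(1,2)] that(3) by (cases "a = b") auto
  obtain e0 where e0: "e0 > 0" "ball \<tau>s e0 \<subseteq> I" using Iopen \<tau>sI by (rule openE)
  define \<delta>0 where "\<delta>0 = e0 / 2"
  have \<delta>0: "\<delta>0 > 0" "\<And>s. \<bar>s - \<tau>s\<bar> \<le> \<delta>0 \<Longrightarrow> s \<in> I"
  proof -
    show "\<delta>0 > 0" using e0 by (simp add: \<delta>0_def)
    fix s assume "\<bar>s - \<tau>s\<bar> \<le> \<delta>0"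
    then have "\<bar>\<tau>s - s\<bar> < e0" using e0 by (simp add: \<delta>0_def abs_minus_commute)
    then show "s \<in> I" using e0(2) by (auto simp: dist_real_def subset_iff)
  qed
  have "\<forall>i\<in>Y. \<exists>ri. ri > 0 \<and> eventually (\<lambda>t. c t i > ri) at_top"
  proof
    fix i assume i: "i \<in> Y"
    have "0 < Liminf at_top (\<lambda>t. ereal (c t i))" using persistent i by (simp add: Y_def)
    then obtain z where z: "0 < ereal z" "ereal z < Liminf at_top (\<lambda>t. ereal (c t i))"
      using ereal_dense2 by blast
    have "eventually (\<lambda>t. ereal z < ereal (c t i)) at_top" using less_LiminfD[OF z(2)] .
    then have "eventually (\<lambda>t. z < c t i) at_top" by simp
    moreover have "z > 0" using z(1) by simp
    ultimately show "\<exists>ri. ri > 0 \<and> eventually (\<lambda>t. c t i > ri) at_top" by blast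
  qed
  from bchoice[OF this] obtain r where r: "\<forall>i\<in>Y. r i > 0 \<and> eventually (\<lambda>t. c t i > r i) at_top"
    by blast
  have evr: "eventually (\<lambda>t. \<forall>i\<in>Y. c t i > r i) at_top"
    using r finS by (intro eventually_ball_finite) auto
  define kt where "kt j t = \<kappa> j * monom X2 (c t) (v j)" for j t
  have ktlim: "((\<lambda>t. kt j t) \<longlongrightarrow> KK j) at_top" for j
    unfolding kt_def KK_eq using conv1 X2eq by (intro tendsto_intros monom_tendsto) auto
  have evk: "eventually (\<lambda>t. \<forall>j<n. \<bar>kt j t - KK j\<bar> \<le> \<epsilon> * KK j) at_top" if "\<epsilon> > 0" for \<epsilon>
  proof -
    have "\<forall>j\<in>{..<n}. eventually (\<lambda>t. \<bar>kt j t - KK j\<bar> \<le> \<epsilon> * KK j) at_top"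
    proof
      fix j assume "j \<in> {..<n}"
      then have "\<epsilon> * KK j > 0" using KKpos that by simp
      from ktlim[of j, unfolded tendsto_iff, rule_format, OF this]
      show "eventually (\<lambda>t. \<bar>kt j t - KK j\<bar> \<le> \<epsilon> * KK j) at_top"
        by (rule eventually_mono) (simp add: dist_real_def)
    qed
    then have "eventually (\<lambda>t. \<forall>j\<in>{..<n}. \<bar>kt j t - KK j\<bar> \<le> \<epsilon> * KK j) at_top"
      by (intro eventually_ball_finite) auto
    then show ?thesis by (rule eventually_mono) auto
  qed
  define M where "M t j = monom Y (P (\<sigma> t)) (v j)" for t j
  have \<Phi>c: "\<Phi> (c t) = (\<Sum>j<n. of_int (m j) * kt j t * M t j)" if "t \<ge> 0" for t
  proof -
    have "monom Y (c t) w = monom Y (P (\<sigma> t)) w" for w using cP that by (intro monom_cong) auto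
    then show ?thesis unfolding \<Phi>_def msplit kt_def M_def by (simp add: mult_ac)
  qed
  have Mpos: "\<forall>i\<in>Y. P (\<sigma> t) i > r i" if "t \<ge> 0" "\<forall>i\<in>Y. c t i > r i" for t
    using cP that by auto
  have Ppos: "\<forall>i\<in>Y. P (\<sigma> t) i > 0" if "t \<ge> 0" "\<forall>i\<in>Y. c t i > r i" for t
  proof
    fix i assume i: "i \<in> Y"
    have "P (\<sigma> t) i > r i" using Mpos[OF that] i by blast
    moreover have "r i > 0" using r i by blast
    ultimately show "P (\<sigma> t) i > 0" by linarith
  qed
  have Mnn: "\<forall>j<n. M t j \<ge> 0" if "t \<ge> 0" "\<forall>i\<in>Y. c t i > r i" for t
    using Ppos[OF that] unfolding M_def by (intro allI impI monom_nonneg) (simp add: less_imp_le)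
  have Mr: "M t jm \<ge> monom Y r (v jm)" if "t \<ge> 0" "\<forall>i\<in>Y. c t i > r i" for t
  proof -
    have "0 \<le> r i \<and> r i \<le> P (\<sigma> t) i" if "i \<in> Y" for i
      using Mpos[OF \<open>t \<ge> 0\<close> \<open>\<forall>i\<in>Y. c t i > r i\<close>] r that by (simp add: less_imp_le)
    then show ?thesis unfolding M_def by (intro monom_mono)
  qed
  have \<sigma>I: "\<sigma> t \<in> I" if "t \<ge> 0" "\<forall>i\<in>Y. c t i > r i" for t
    using Ppos[OF that] unfolding I_def by blast
  have mr: "monom Y r (v jm) > 0" using r by (intro monom_pos) auto
  have KM: "\<forall>j<n. KK j * M t j \<ge> 0" if "t \<ge> 0" "\<forall>i\<in>Y. c t i > r i" for t
    using KKpos Mnn[OF that] by (simp add: less_imp_le)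
  have upper: "\<exists>T. \<forall>t\<ge>T. \<sigma> t \<le> \<tau>s + \<delta>" if \<delta>: "0 < \<delta>" "\<delta> \<le> \<delta>0" for \<delta>
  proof -
    define A where "A = \<tau>s + \<delta>"
    have AI: "A \<in> I" using \<delta> \<delta>0 by (simp add: A_def)
    define u0 where "u0 = U A"
    have u0: "u0 > 1" using Uinc[OF \<tau>sI AI] \<delta> U1 by (simp add: A_def u0_def)
    define \<epsilon> where "\<epsilon> = (u0 - 1) / (2 * (u0 + 1))"
    have \<epsilon>: "\<epsilon> > 0" using u0 by (simp add: \<epsilon>_def)
    define \<gamma> where "\<gamma> = (1 - \<epsilon>) - (1 + \<epsilon>) / u0"
    have e1: "\<epsilon> * (u0 + 1) = (u0 - 1) / 2" unfolding \<epsilon>_def using u0 by (simp add: field_simps)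
    have "\<gamma> * u0 = (u0 - 1) - \<epsilon> * (u0 + 1)" unfolding \<gamma>_def using u0 by (simp add: field_simps)
    then have "\<gamma> * u0 > 0" using e1 u0 by simp
    then have \<gamma>: "\<gamma> > 0" using u0 by (simp add: zero_less_mult_iff)
    obtain T where T: "\<And>t. t \<ge> T \<Longrightarrow> (\<forall>i\<in>Y. c t i > r i) \<and> (\<forall>j<n. \<bar>kt j t - KK j\<bar> \<le> \<epsilon> * KK j)"
      using eventually_conj[OF evr evk[OF \<epsilon>]] by (auto simp: eventually_at_top_linorder)
    define \<alpha> where "\<alpha> = \<gamma> * KK jm * monom Y r (v jm)"
    have \<alpha>: "\<alpha> > 0" unfolding \<alpha>_def using \<gamma> KKpos jm mr by simp
    have H: "\<forall>t\<ge>max T 0. \<sigma> t \<ge> A \<longrightarrow> \<Phi> (c t) \<le> - \<alpha>"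
    proof (intro allI impI)
      fix t assume t: "max T 0 \<le> t" and sA: "A \<le> \<sigma> t"
      have t0: "t \<ge> 0" and rt: "\<forall>i\<in>Y. c t i > r i" and kb: "\<forall>j<n. \<bar>kt j t - KK j\<bar> \<le> \<epsilon> * KK j"
        using t T by auto
      have sI: "\<sigma> t \<in> I" using \<sigma>I[OF t0 rt] .
      have "u0 \<le> U (\<sigma> t)" using Uge[OF AI sI sA] by (simp add: u0_def)
      then have "G_fun Y R2 KK m (P (\<sigma> t)) u0 \<le> G_fun Y R2 KK m (P (\<sigma> t)) (U (\<sigma> t))"
        using u0 by (intro Gmono Ipos[OF sI]) auto
      then have G0: "G_fun Y R2 KK m (P (\<sigma> t)) u0 \<le> 0" using Uprop(2)[OF sI] by simp
      have "(\<Sum>j<n. KK j * M t j * wf (m j) u0) \<le> G_fun Y R2 KK m (P (\<sigma> t)) u0"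
        unfolding Gsum M_def[symmetric]
        using KM[OF t0 rt] u0 by (intro sum_mono mult_left_mono gm_ge_wf) auto
      with G0 have Gle: "(\<Sum>j<n. KK j * M t j * wf (m j) u0) \<le> 0" by linarith
      have kb': "\<forall>j<n. (m j > 0 \<longrightarrow> kt j t \<le> (1+\<epsilon>) * KK j) \<and> (m j < 0 \<longrightarrow> (1-\<epsilon>) * KK j \<le> kt j t)"
        using kb by (auto simp: algebra_simps abs_le_iff)
      have "\<Phi> (c t) \<le> - \<gamma> * KK jm * M t jm"
        unfolding \<Phi>c[OF t0]
        by (rule up_bound[OF KKpos Mnn[OF t0 rt] _ _ Gle kb' jm \<gamma>_def]) (use u0 \<epsilon> \<gamma> in auto)
      also have "\<dots> \<le> - \<alpha>"
      proof -
        have "\<gamma> * KK jm * monom Y r (v jm) \<le> \<gamma> * KK jm * M t jm"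
          using Mr[OF t0 rt] \<gamma> KKpos jm by (intro mult_left_mono) auto
        then show ?thesis by (simp add: \<alpha>_def)
      qed
      finally show "\<Phi> (c t) \<le> - \<alpha>" .
    qed
    from eventually_below[OF d\<sigma> _ \<alpha> H] show ?thesis by (auto simp: A_def)
  qed
  have lower: "\<exists>T. \<forall>t\<ge>T. \<tau>s - \<delta> \<le> \<sigma> t" if \<delta>: "0 < \<delta>" "\<delta> \<le> \<delta>0" for \<delta>
  proof -
    define B where "B = \<tau>s - \<delta>"
    have BI: "B \<in> I" using \<delta> \<delta>0 by (simp add: B_def)
    define u1 where "u1 = U B"
    have u1: "u1 < 1" "u1 > 0" using Uinc[OF BI \<tau>sI] \<delta> U1 Uprop(1)[OF BI] by (auto simp: B_def u1_def)
    define \<epsilon> where "\<epsilon> = (1 - u1) / (2 * (1 + u1))"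
    have \<epsilon>: "\<epsilon> > 0" "\<epsilon> \<le> 1" using u1 by (auto simp: \<epsilon>_def field_simps)
    define \<gamma> where "\<gamma> = (1 - \<epsilon>) / u1 - (1 + \<epsilon>)"
    have e1: "\<epsilon> * (1 + u1) = (1 - u1) / 2" unfolding \<epsilon>_def using u1 by (simp add: field_simps)
    have "\<gamma> * u1 = (1 - u1) - \<epsilon> * (1 + u1)" unfolding \<gamma>_def using u1 by (simp add: field_simps)
    then have "\<gamma> * u1 > 0" using e1 u1 by simp
    then have \<gamma>: "\<gamma> > 0" using u1 by (simp add: zero_less_mult_iff)
    obtain T where T: "\<And>t. t \<ge> T \<Longrightarrow> (\<forall>i\<in>Y. c t i > r i) \<and> (\<forall>j<n. \<bar>kt j t - KK j\<bar> \<le> \<epsilon> * KK j)"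
      using eventually_conj[OF evr evk[OF \<epsilon>(1)]] by (auto simp: eventually_at_top_linorder)
    define \<alpha> where "\<alpha> = \<gamma> * KK jm * monom Y r (v jm)"
    have \<alpha>: "\<alpha> > 0" unfolding \<alpha>_def using \<gamma> KKpos jm mr by simp
    have H: "\<forall>t\<ge>max T 0. - \<sigma> t \<ge> - B \<longrightarrow> - \<Phi> (c t) \<le> - \<alpha>"
    proof (intro allI impI)
      fix t assume t: "max T 0 \<le> t" and sB: "- B \<le> - \<sigma> t"
      have t0: "t \<ge> 0" and rt: "\<forall>i\<in>Y. c t i > r i" and kb: "\<forall>j<n. \<bar>kt j t - KK j\<bar> \<le> \<epsilon> * KK j"
        using t T by auto
      have sI: "\<sigma> t \<in> I" using \<sigma>I[OF t0 rt] .
      have "U (\<sigma> t) \<le> u1" using Uge[OF sI BI] sB by (simp add: u1_def)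
      then have "G_fun Y R2 KK m (P (\<sigma> t)) (U (\<sigma> t)) \<le> G_fun Y R2 KK m (P (\<sigma> t)) u1"
        using Uprop(1)[OF sI] by (intro Gmono Ipos[OF sI]) auto
      then have G0: "G_fun Y R2 KK m (P (\<sigma> t)) u1 \<ge> 0" using Uprop(2)[OF sI] by simp
      have "G_fun Y R2 KK m (P (\<sigma> t)) u1 \<le> (\<Sum>j<n. KK j * M t j * wf (m j) u1)"
        unfolding Gsum M_def[symmetric]
        using KM[OF t0 rt] u1 by (intro sum_mono mult_left_mono gm_le_wf) auto
      with G0 have Gge: "(\<Sum>j<n. KK j * M t j * wf (m j) u1) \<ge> 0" by linarith
      have kb': "\<forall>j<n. (m j > 0 \<longrightarrow> (1-\<epsilon>) * KK j \<le> kt j t) \<and> (m j < 0 \<longrightarrow> kt j t \<le> (1+\<epsilon>) * KK j)"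
        using kb by (auto simp: algebra_simps abs_le_iff)
      have "\<alpha> \<le> \<gamma> * KK jm * M t jm"
        using Mr[OF t0 rt] \<gamma> KKpos jm unfolding \<alpha>_def by (intro mult_left_mono) auto
      also have "\<dots> \<le> \<Phi> (c t)"
        unfolding \<Phi>c[OF t0]
        by (rule low_bound[OF KKpos Mnn[OF t0 rt] u1(2) _ _ Gge kb' jm \<gamma>_def]) (use \<epsilon> \<gamma> in auto)
      finally show "- \<Phi> (c t) \<le> - \<alpha>" by simp
    qed
    have dm: "\<forall>t\<ge>0. ((\<lambda>t. - \<sigma> t) has_real_derivative - \<Phi> (c t)) (at t within {0..})"
      using d\<sigma> by (auto intro: DERIV_minus)
    from eventually_below[OF dm _ \<alpha> H] obtain T' where "\<forall>t\<ge>T'. - \<sigma> t \<le> - B" by auto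
    then show ?thesis by (intro exI[of _ T']) (auto simp: B_def)
  qed
  have \<sigma>lim: "(\<sigma> \<longlongrightarrow> \<tau>s) at_top"
  proof (rule tendstoI)
    fix e :: real assume e: "e > 0"
    define \<delta> where "\<delta> = min (e/2) \<delta>0"
    have \<delta>: "0 < \<delta>" "\<delta> \<le> \<delta>0" using e \<delta>0 by (auto simp: \<delta>_def)
    obtain T1 where T1: "\<forall>t\<ge>T1. \<sigma> t \<le> \<tau>s + \<delta>" using upper[OF \<delta>] by blast
    obtain T2 where T2: "\<forall>t\<ge>T2. \<tau>s - \<delta> \<le> \<sigma> t" using lower[OF \<delta>] by blast
    have "\<forall>t\<ge>max T1 T2. dist (\<sigma> t) \<tau>s < e"
    proof (intro allI impI)
      fix t assume "max T1 T2 \<le> t"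
      then have "\<sigma> t \<le> \<tau>s + \<delta>" "\<tau>s - \<delta> \<le> \<sigma> t" using T1 T2 by auto
      moreover have "\<delta> < e" using e by (simp add: \<delta>_def)
      ultimately show "dist (\<sigma> t) \<tau>s < e" by (simp add: dist_real_def abs_less_iff)
    qed
    then show "eventually (\<lambda>t. dist (\<sigma> t) \<tau>s < e) at_top"
      unfolding eventually_at_top_linorder by blast
  qed
  have "\<forall>i\<in>S2 - X2. ((\<lambda>t. c t i) \<longlongrightarrow> ybar2 i) at_top"
  proof
    fix i assume i: "i \<in> S2 - X2"
    then have iY: "i \<in> Y" by (simp add: Y_def)
    have "eventually (\<lambda>t. P (\<sigma> t) i = c t i) at_top"
      by (rule eventually_mono[OF eventually_ge_at_top[of "0::real"]]) (use cP iY in auto)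
    moreover have "((\<lambda>t. P (\<sigma> t) i) \<longlongrightarrow> P \<tau>s i) at_top"
      unfolding P_def by (intro tendsto_intros \<sigma>lim)
    ultimately have "((\<lambda>t. c t i) \<longlongrightarrow> P \<tau>s i) at_top" using tendsto_cong by fastforce
    then show "((\<lambda>t. c t i) \<longlongrightarrow> ybar2 i) at_top" using ybar2P iY by simp
  qed
  with conv1 show ?thesis by blast
qed

end
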